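(* For all $(t,\theta,a,\ell)$ with $t>0$, $a,\ell>0$ and $|\theta|\le at/2$ we have $$at\lesssim\tilde R\lesssim p+at,$$ $$|\partial_\theta\tilde R-1|\lesssim\frac p{at},\qquad|\partial_a\tilde R-t|\lesssim\Big\langle\frac pa\Big\rangle\ln\langle t\rangle,$$ $$|\partial_\theta^2\tilde R|\lesssim\frac p{a^2t^2},\qquad|\partial^2_{a\theta}\tilde R|\lesssim\frac p{a^2t},\qquad|\partial_a^2\tilde R|\lesssim\frac1a\Big\langle\frac pa\Big\rangle\ln\langle t\rangle,$$ where $p=p(a,\ell)$ and all derivatives are taken with respect to the variables $(\theta,a)$ of $\tilde R(t,\theta,a,\ell)=R(\theta+at,a,\ell)$.
   Context: Fix $m>0$. For $a,\ell>0$: $\kappa(a,\ell)=(1+4a^2\ell/m^2)^{-1/2}$, $p(a,\ell)=\frac{m}{2a^2\kappa(a,\ell)}$. For $\kappa\in(0,1)$, $G_\kappa(x)=\sqrt{x^2-1}-\kappa\ln(x+\sqrt{x^2-1})$ on $[1,\infty)$, $H_\kappa=G_\kappa^{-1}:[0,\infty)\to[1,\infty)$. $R(\theta,a,\ell)=pH_\kappa(|\theta|/p)-p\kappa$ (smooth on $\mathbb R\times(0,\infty)^2$) and $\tilde R(t,\theta,a,\ell)=R(\theta+at,a,\ell)$. $\langle x\rangle=(2+|x|^2)^{1/2}$. $A\lesssim B$ means $A\le CB$ with $C$ independent of $t,\theta,a,\ell$. *)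

theory Defs
  imports "HOL-Analysis.Analysis"
begin

definition kappa :: "real \<Rightarrow> real \<Rightarrow> real \<Rightarrow> real" where
  "kappa m a l = 1 / sqrt (1 + 4 * a\<^sup>2 * l / m\<^sup>2)"

definition pfun :: "real \<Rightarrow> real \<Rightarrow> real \<Rightarrow> real" where
  "pfun m a l = m / (2 * a\<^sup>2 * kappa m a l)"

definition Gk :: "real \<Rightarrow> real \<Rightarrow> real" where
  "Gk k x = sqrt (x\<^sup>2 - 1) - k * ln (x + sqrt (x\<^sup>2 - 1))"

definition Hk :: "real \<Rightarrow> real \<Rightarrow> real" where
  "Hk k y = (THE x. 1 \<le> x \<and> Gk k x = y)"

definition Rfun :: "real \<Rightarrow> real \<Rightarrow> real \<Rightarrow> real \<Rightarrow> real" where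
  "Rfun m \<theta> a l = pfun m a l * Hk (kappa m a l) (\<bar>\<theta>\<bar> / pfun m a l) - pfun m a l * kappa m a l"

definition Rtil :: "real \<Rightarrow> real \<Rightarrow> real \<Rightarrow> real \<Rightarrow> real \<Rightarrow> real" where
  "Rtil m t \<theta> a l = Rfun m (\<theta> + a * t) a l"

definition japan :: "real \<Rightarrow> real" where
  "japan x = sqrt (2 + x\<^sup>2)"

end

theory Submission
  imports Defs
begin

lemma sinh_ge_self: "0 \<le> (u::real) \<Longrightarrow> u \<le> sinh u"
  using real_le_x_sinh[of u] by (simp add: sinh_field_def exp_minus field_simps)

lemma sinh_le_u_cosh: assumes "0 \<le> (u::real)" shows "sinh u \<le> u * cosh u"
proof -
  have "(\<lambda>x. x * cosh x - sinh x) 0 \<le> (\<lambda>x. x * cosh x - sinh x) u"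
  proof (rule DERIV_nonneg_imp_nondecreasing[OF assms])
    fix x :: real assume "0 \<le> x" "x \<le> u"
    show "\<exists>y. ((\<lambda>x. x * cosh x - sinh x) has_real_derivative y) (at x) \<and> 0 \<le> y"
      apply (rule exI[of _ "x * sinh x"], rule conjI)
       apply (rule derivative_eq_intros refl | simp)+
      using \<open>0 \<le> x\<close> by simp
  qed
  then show ?thesis by simp
qed

lemma cosh_ge_quad: assumes "0 \<le> (u::real)" shows "1 + u\<^sup>2 / 2 \<le> cosh u"
proof -
  have "(\<lambda>x. cosh x - 1 - x\<^sup>2/2) 0 \<le> (\<lambda>x. cosh x - 1 - x\<^sup>2/2) u"
  proof (rule DERIV_nonneg_imp_nondecreasing[OF assms])
    fix x :: real assume "0 \<le> x" "x \<le> u"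
    show "\<exists>y. ((\<lambda>x. cosh x - 1 - x\<^sup>2/2) has_real_derivative y) (at x) \<and> 0 \<le> y"
      apply (rule exI[of _ "sinh x - x"], rule conjI)
       apply (rule derivative_eq_intros refl | simp)+
      using \<open>0 \<le> x\<close> sinh_ge_self by simp
  qed
  then show ?thesis by simp
qed

lemma cosh_le_u_sinh: assumes "0 \<le> (u::real)" shows "cosh u - 1 \<le> u * sinh u"
proof -
  have "(\<lambda>x. x * sinh x - cosh x + 1) 0 \<le> (\<lambda>x. x * sinh x - cosh x + 1) u"
  proof (rule DERIV_nonneg_imp_nondecreasing[OF assms])
    fix x :: real assume "0 \<le> x" "x \<le> u"
    show "\<exists>y. ((\<lambda>x. x * sinh x - cosh x + 1) has_real_derivative y) (at x) \<and> 0 \<le> y"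
      apply (rule exI[of _ "x * cosh x"], rule conjI)
       apply (rule derivative_eq_intros refl | simp)+
      using \<open>0 \<le> x\<close> by simp
  qed
  then show ?thesis by simp
qed

lemma em_eq: "cosh (u::real) - sinh u = exp (- u)"
  by (rule cosh_minus_sinh)

lemma em_le1: "0 \<le> (u::real) \<Longrightarrow> exp (-u) \<le> 1" by simp
lemma em_ge: "1 - (u::real) \<le> exp (-u)" using exp_ge_add_one_self[of "-u"] by simp
lemma u_em_le1: "(u::real) * exp (-u) \<le> 1"
proof -
  have "u \<le> exp u" using exp_ge_add_one_self[of u] by linarith
  then show ?thesis by (simp add: exp_minus field_simps)
qed

lemma cosh_le2: assumes "0 \<le> (u::real)" "u \<le> 1" shows "cosh u \<le> 2"
proof -
  have "exp u \<le> exp 1" using assms by simp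
  also have "\<dots> \<le> 3" by (rule exp_le)
  finally have "exp u \<le> 3" .
  moreover have "exp (-u) \<le> 1" using assms by simp
  ultimately have "exp u + exp (-u) \<le> 4" by linarith
  then show ?thesis by (simp add: cosh_field_def)
qed

lemma sinh_le_2u: assumes "0 \<le> (u::real)" "u \<le> 1" shows "sinh u \<le> 2 * u"
proof -
  have "u * cosh u \<le> u * 2" using cosh_le2[OF assms] assms(1) by (rule mult_left_mono)
  then show ?thesis using sinh_le_u_cosh[OF assms(1)] by simp
qed

lemma cosh_big: assumes "1 \<le> (u::real)" shows "cosh u \<le> 3 * (cosh u - 1)"
proof -
  have "1 \<le> u\<^sup>2" using assms by (simp add: one_le_power)
  moreover have "1 + u\<^sup>2/2 \<le> cosh u" using cosh_ge_quad[of u] assms by simp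
  ultimately have "1 + 1/2 \<le> cosh u" by linarith
  then show ?thesis by simp
qed

lemma cosh_sq: "(cosh (u::real))\<^sup>2 = 1 + (sinh u)\<^sup>2" by (simp add: cosh_square_eq)

lemma u_big_bound: assumes "7 \<le> (u::real)" shows "exp u / 4 \<le> sinh u - u"
proof -
  have "1 + u + u\<^sup>2/2 \<le> exp u" using exp_lower_Taylor_quadratic[of u] assms by simp
  moreover have "4*u + 2 \<le> 1 + u + u\<^sup>2/2"
  proof -
    have "7 * u \<le> u * u" using assms by (intro mult_right_mono) auto
    then show ?thesis using assms unfolding power2_eq_square by linarith
  qed
  moreover have "exp (-u) \<le> 1" using assms by simp
  ultimately have h: "0 \<le> (exp u - 4*u - 2)/4 + (1 - exp(-u))/2" by simp
  have "sinh u - u - exp u/4 = (exp u - 4*u - 2)/4 + (1 - exp(-u))/2"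
    by (simp add: sinh_field_def field_simps)
  then show ?thesis using h by linarith
qed


lemma sinh_diff_ge: assumes "(v::real) \<le> w" shows "w - v \<le> sinh w - sinh v"
proof -
  have "(\<lambda>x. sinh x - x) v \<le> (\<lambda>x. sinh x - x) w"
  proof (rule DERIV_nonneg_imp_nondecreasing[OF assms])
    fix x :: real assume "v \<le> x" "x \<le> w"
    show "\<exists>y. ((\<lambda>x. sinh x - x) has_real_derivative y) (at x) \<and> 0 \<le> y"
      apply (rule exI[of _ "cosh x - 1"], rule conjI)
       apply (rule derivative_eq_intros refl | simp)+
      using cosh_real_ge_1[of x] by simp
  qed
  then show ?thesis by simp
qed

lemma Fmono: assumes "(B::real) < 1" "v < w" shows "sinh v - B * v < sinh w - B * w"
proof -
  have "w - v \<le> sinh w - sinh v" using sinh_diff_ge assms by simp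
  moreover have "B * (w - v) < 1 * (w - v)" using assms by (intro mult_strict_right_mono) auto
  ultimately show ?thesis by (simp add: algebra_simps)
qed

lemma Fmono_le: assumes "(B::real) < 1" shows "sinh v - B * v \<le> sinh w - B * w \<longleftrightarrow> v \<le> w"
  using Fmono[OF assms, of v w] Fmono[OF assms, of w v] by (cases v w rule: linorder_cases) auto

lemma Finj: assumes "(B::real) < 1" "sinh v - B * v = sinh w - B * w" shows "v = w"
  using Fmono_le[OF assms(1)] assms(2) by (metis order_antisym order_refl)

definition V :: "real \<Rightarrow> real \<Rightarrow> real" where
  "V k y = (THE u. 0 \<le> u \<and> sinh u - k * u = y)"

lemma V_ex: assumes "0 < (k::real)" "k < 1" "0 \<le> y" shows "\<exists>u. 0 \<le> u \<and> sinh u - k * u = y"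
proof -
  define b where "b = y / (1 - k)"
  have b0: "0 \<le> b" using assms by (simp add: b_def)
  have "b - k * b = (1 - k) * b" by (simp add: algebra_simps)
  then have "y = b - k * b" using assms by (simp add: b_def)
  also have "\<dots> \<le> sinh b - k * b" using sinh_ge_self[OF b0] by simp
  finally have "y \<le> sinh b - k * b" .
  moreover have "sinh 0 - k * 0 \<le> y" using assms by simp
  moreover have "\<forall>x. 0 \<le> x \<and> x \<le> b \<longrightarrow> isCont (\<lambda>u. sinh u - k * u) x"
    by (simp add: isCont_sinh)
  ultimately have "\<exists>x. 0 \<le> x \<and> x \<le> b \<and> sinh x - k * x = y"
    using IVT[of "\<lambda>u. sinh u - k * u" 0 y b] b0 by simp
  then show ?thesis by blast
qed

lemma V_prop: assumes "0 < (k::real)" "k < 1" "0 \<le> y"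
  shows "0 \<le> V k y" "sinh (V k y) - k * V k y = y"
proof -
  obtain u where u: "0 \<le> u" "sinh u - k * u = y" using V_ex[OF assms] by blast
  have "V k y = u" unfolding V_def
  proof (rule the_equality)
    show "0 \<le> u \<and> sinh u - k * u = y" using u by simp
    fix x assume "0 \<le> x \<and> sinh x - k * x = y"
    then show "x = u" using Finj[of k x u] u assms by simp
  qed
  then show "0 \<le> V k y" "sinh (V k y) - k * V k y = y" using u by auto
qed

lemma V_pos: assumes "0 < (k::real)" "k < 1" "0 < y" shows "0 < V k y"
proof -
  have "V k y \<noteq> 0"
  proof
    assume "V k y = 0"
    then show False using V_prop(2)[OF assms(1,2), of y] assms(3) by simp
  qed
  moreover have "0 \<le> V k y" using V_prop(1)[OF assms(1,2), of y] assms(3) by simp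
  ultimately show ?thesis by simp
qed

lemma Gk_cosh: assumes "0 \<le> (u::real)" shows "Gk k (cosh u) = sinh u - k * u"
proof -
  have "sqrt ((cosh u)\<^sup>2 - 1) = sinh u" using assms by (simp add: cosh_square_eq)
  moreover have "cosh u + sinh u = exp u" by (rule cosh_plus_sinh)
  ultimately show ?thesis unfolding Gk_def by simp
qed

lemma Hk_eq: assumes "0 < (k::real)" "k < 1" "0 \<le> y" shows "Hk k y = cosh (V k y)"
  unfolding Hk_def
proof (rule the_equality)
  show "1 \<le> cosh (V k y) \<and> Gk k (cosh (V k y)) = y"
    using V_prop[OF assms] Gk_cosh cosh_real_ge_1 by auto
next
  fix x assume x: "1 \<le> x \<and> Gk k x = y"
  define w where "w = arcosh x"
  have w0: "0 \<le> w" using x by (simp add: w_def)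
  have xw: "x = cosh w" using x by (simp add: w_def)
  have "sinh w - k * w = y" using x Gk_cosh[OF w0, of k] xw by simp
  then have "w = V k y" using V_prop[OF assms] Finj[of k w "V k y"] assms by simp
  then show "x = cosh (V k y)" using xw by simp
qed


lemma kappa_pos: "0 \<le> l \<Longrightarrow> 0 < kappa m a l"
  unfolding kappa_def by (simp add: add_pos_nonneg)

lemma kappa_sq: assumes "m \<noteq> 0" "0 \<le> l" shows "(kappa m a l)\<^sup>2 = 1 / (1 + 4 * a\<^sup>2 * l / m\<^sup>2)"
proof -
  have "0 \<le> 4 * a\<^sup>2 * l / m\<^sup>2" using assms by simp
  then show ?thesis unfolding kappa_def by (simp add: power_divide)
qed

lemma kappa_lt1: assumes "m \<noteq> 0" "0 < l" "a \<noteq> 0" shows "kappa m a l < 1"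
proof -
  have "0 < 4 * a\<^sup>2 * l / m\<^sup>2" using assms by simp
  then have "1 < sqrt (1 + 4 * a\<^sup>2 * l / m\<^sup>2)" by simp
  then show ?thesis unfolding kappa_def by simp
qed

lemma Dcong: "(f has_real_derivative X) F \<Longrightarrow> X = Y \<Longrightarrow> (f has_real_derivative Y) F"
  by simp

lemma kappa_deriv: assumes "0 < m" "0 < l" "0 < a"
  shows "((\<lambda>a. kappa m a l) has_real_derivative (-(kappa m a l / a) * (1 - (kappa m a l)\<^sup>2))) (at a)"
proof -
  define q where "q = 1 + 4 * a\<^sup>2 * l / m\<^sup>2"
  have q0: "0 < q" using assms by (simp add: q_def add_pos_nonneg)
  have sq: "(sqrt q)\<^sup>2 = q" using q0 by simp
  have d1: "((\<lambda>a. 1 + 4 * a\<^sup>2 * l / m\<^sup>2) has_real_derivative (8 * a * l / m\<^sup>2)) (at a)"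
    apply (rule Dcong)
     apply (rule derivative_eq_intros refl)+
    using assms apply simp_all
    by (simp add: field_simps power2_eq_square eval_nat_numeral)
  have d2: "((\<lambda>a. sqrt (1 + 4 * a\<^sup>2 * l / m\<^sup>2)) has_real_derivative (inverse (sqrt q) / 2 * (8 * a * l / m\<^sup>2))) (at a)"
    using DERIV_chain2[OF DERIV_real_sqrt[OF q0[unfolded q_def]] d1] unfolding q_def by simp
  have sq0: "sqrt q \<noteq> 0" using q0 by simp
  have d3: "((\<lambda>a. inverse (sqrt (1 + 4 * a\<^sup>2 * l / m\<^sup>2))) has_real_derivative
      (- ((inverse (sqrt q) / 2 * (8 * a * l / m\<^sup>2)) * inverse (sqrt q ^ Suc (Suc 0))))) (at a)"
  proof -
    have h: "sqrt (1 + 4 * a\<^sup>2 * l / m\<^sup>2) = sqrt q" by (simp add: q_def)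
    show ?thesis using DERIV_inverse_fun[OF d2, unfolded h] sq0 by blast
  qed
  have kq: "kappa m a l = inverse (sqrt q)" unfolding kappa_def q_def by (simp add: divide_inverse)
  have eq: "- ((inverse (sqrt q) / 2 * (8 * a * l / m\<^sup>2)) * inverse (sqrt q ^ Suc (Suc 0)))
      = -(kappa m a l / a) * (1 - (kappa m a l)\<^sup>2)"
  proof -
    have "(kappa m a l)\<^sup>2 = 1 / q" unfolding kq using sq by (simp add: power_inverse divide_inverse)
    moreover have "q - 1 = 4 * a\<^sup>2 * l / m\<^sup>2" by (simp add: q_def)
    ultimately show ?thesis unfolding kq using sq assms q0 sq0
      by (simp add: field_simps power2_eq_square eval_nat_numeral)
  qed
  have "(\<lambda>a. kappa m a l) = (\<lambda>a. inverse (sqrt (1 + 4 * a\<^sup>2 * l / m\<^sup>2)))"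
    unfolding kappa_def by (simp add: divide_inverse)
  then show ?thesis using d3 eq by simp
qed

lemma pfun_pos: assumes "0 < m" "0 \<le> l" "a \<noteq> 0" shows "0 < pfun m a l"
  unfolding pfun_def using kappa_pos[OF assms(2), of m a] assms by simp

lemma pfun_kappa: assumes "0 < m" "0 \<le> l" "a \<noteq> 0" shows "pfun m a l * kappa m a l = m / (2 * a\<^sup>2)"
  unfolding pfun_def using kappa_pos[OF assms(2), of m a] assms by simp

lemma pfun_deriv: assumes "0 < m" "0 < l" "0 < a"
  shows "((\<lambda>a. pfun m a l) has_real_derivative (-(pfun m a l / a) * (1 + (kappa m a l)\<^sup>2))) (at a)"
  unfolding pfun_def
  apply (rule Dcong)
   apply (rule derivative_eq_intros refl kappa_deriv[OF assms])+
  using assms kappa_pos[of l m a] apply simp_all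
  by (simp add: field_simps power2_eq_square eval_nat_numeral)


lemma implicit_cont:
  fixes g B c :: "real \<Rightarrow> real"
  assumes S: "open S" "x \<in> S"
  and eq: "\<And>z. z \<in> S \<Longrightarrow> sinh (g z) - B z * g z = c z"
  and B1: "\<And>z. z \<in> S \<Longrightarrow> B z < 1"
  and cB: "isCont B x" and cc: "isCont c x"
  shows "isCont g x"
  unfolding isCont_def tendsto_iff
proof (intro allI impI)
  fix e :: real assume e: "0 < e"
  define g0 where "g0 = g x"
  have hp: "0 < sinh (g0 + e) - B x * (g0 + e) - c x"
    using Fmono[OF B1[OF S(2)], of g0 "g0 + e"] eq[OF S(2)] e unfolding g0_def by simp
  have hm: "sinh (g0 - e) - B x * (g0 - e) - c x < 0"
    using Fmono[OF B1[OF S(2)], of "g0 - e" g0] eq[OF S(2)] e unfolding g0_def by simp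
  have c1: "isCont (\<lambda>z. sinh (g0 + e) - B z * (g0 + e) - c z) x"
    using cB cc by (intro continuous_intros) auto
  have c2: "isCont (\<lambda>z. sinh (g0 - e) - B z * (g0 - e) - c z) x"
    using cB cc by (intro continuous_intros) auto
  have ev1: "eventually (\<lambda>z. 0 < sinh (g0 + e) - B z * (g0 + e) - c z) (at x)"
    using order_tendstoD(1)[OF c1[unfolded isCont_def] hp] .
  have ev2: "eventually (\<lambda>z. sinh (g0 - e) - B z * (g0 - e) - c z < 0) (at x)"
    using order_tendstoD(2)[OF c2[unfolded isCont_def] hm] .
  have ev3: "eventually (\<lambda>z. z \<in> S) (at x)" using eventually_at_in_open'[OF S] .
  show "eventually (\<lambda>z. dist (g z) (g x) < e) (at x)"
    using ev1 ev2 ev3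
  proof eventually_elim
    case (elim z)
    have Bz: "B z < 1" using B1 elim(3) .
    have ez: "sinh (g z) - B z * g z = c z" using eq elim(3) .
    have "g z < g0 + e"
    proof (rule ccontr)
      assume "\<not> g z < g0 + e"
      then have "sinh (g0 + e) - B z * (g0 + e) \<le> sinh (g z) - B z * g z"
        using Fmono_le[OF Bz] by simp
      then show False using elim(1) ez by simp
    qed
    moreover have "g0 - e < g z"
    proof (rule ccontr)
      assume "\<not> g0 - e < g z"
      then have "sinh (g z) - B z * g z \<le> sinh (g0 - e) - B z * (g0 - e)"
        using Fmono_le[OF Bz] by simp
      then show False using elim(2) ez by simp
    qed
    ultimately show ?case unfolding g0_def dist_real_def by simp
  qed
qed

lemma implicit_deriv:
  fixes g B c :: "real \<Rightarrow> real"
  assumes S: "open S" "x \<in> S"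
  and eq: "\<And>z. z \<in> S \<Longrightarrow> sinh (g z) - B z * g z = c z"
  and cg: "isCont g x"
  and dB: "(B has_real_derivative B') (at x)" and dc: "(c has_real_derivative c') (at x)"
  and nz: "cosh (g x) - B x \<noteq> 0"
  shows "(g has_real_derivative ((g x * B' + c') / (cosh (g x) - B x))) (at x)"
proof -
  define g0 where "g0 = g x"
  define \<sigma> where "\<sigma> w = (if w = g0 then cosh g0 else (sinh w - sinh g0) / (w - g0))" for w
  have sig: "\<sigma> w * (w - g0) = sinh w - sinh g0" for w
    unfolding \<sigma>_def by auto
  have ds: "(sinh has_real_derivative cosh g0) (at g0)"
    using has_field_derivative_sinh[OF DERIV_ident, of g0] by simp
  have "((\<lambda>w. (sinh w - sinh g0) / (w - g0)) \<longlongrightarrow> cosh g0) (at g0)"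
    using has_field_derivative_iff[THEN iffD1, OF ds] by simp
  then have "(\<sigma> \<longlongrightarrow> cosh g0) (at g0)"
    apply (rule Lim_transform_eventually)
    unfolding \<sigma>_def eventually_at_filter by simp
  then have cs: "isCont \<sigma> g0" unfolding isCont_def \<sigma>_def by simp
  have gt: "(g \<longlongrightarrow> g0) (at x)" using cg unfolding isCont_def g0_def .
  have t1: "((\<lambda>y. \<sigma> (g y)) \<longlongrightarrow> \<sigma> g0) (at x)" by (rule isCont_tendsto_compose[OF cs gt])
  have t1': "((\<lambda>y. \<sigma> (g y)) \<longlongrightarrow> cosh g0) (at x)" using t1 unfolding \<sigma>_def by simp
  have t2: "((\<lambda>y. (B y - B x) / (y - x)) \<longlongrightarrow> B') (at x)"
    using has_field_derivative_iff[THEN iffD1, OF dB] .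
  have t3: "((\<lambda>y. (c y - c x) / (y - x)) \<longlongrightarrow> c') (at x)"
    using has_field_derivative_iff[THEN iffD1, OF dc] .
  have t4: "(B \<longlongrightarrow> B x) (at x)" using DERIV_isCont[OF dB] unfolding isCont_def .
  have nz': "cosh g0 - B x \<noteq> 0" using nz unfolding g0_def .
  have tQ: "((\<lambda>y. (g0 * ((B y - B x) / (y - x)) + (c y - c x) / (y - x)) / (\<sigma> (g y) - B y))
      \<longlongrightarrow> (g0 * B' + c') / (cosh g0 - B x)) (at x)"
    by (intro tendsto_intros t1' t2 t3 t4 nz')
  have evnz: "eventually (\<lambda>y. \<sigma> (g y) - B y \<noteq> 0) (at x)"
    using tendsto_imp_eventually_ne[OF tendsto_diff[OF t1' t4] nz'] .
  have evS: "eventually (\<lambda>y. y \<in> S - {x}) (at x)" using eventually_at_in_open[OF S] .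
  have "eventually (\<lambda>y. (g0 * ((B y - B x) / (y - x)) + (c y - c x) / (y - x)) / (\<sigma> (g y) - B y)
      = (g y - g x) / (y - x)) (at x)"
    using evnz evS
  proof eventually_elim
    case (elim y)
    have yx: "y - x \<noteq> 0" using elim(2) by auto
    have ey: "sinh (g y) - B y * g y = c y" using eq elim(2) by auto
    have ex: "sinh g0 - B x * g0 = c x" using eq S(2) unfolding g0_def by auto
    have key: "(g y - g0) * (\<sigma> (g y) - B y) = g0 * (B y - B x) + (c y - c x)"
    proof -
      have "(g y - g0) * (\<sigma> (g y) - B y) = \<sigma> (g y) * (g y - g0) - B y * (g y - g0)"
        by (simp add: algebra_simps)
      also have "\<dots> = sinh (g y) - sinh g0 - B y * (g y - g0)" using sig by simp
      also have "\<dots> = g0 * (B y - B x) + (c y - c x)" using ey ex by (simp add: algebra_simps)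
      finally show ?thesis .
    qed
    have "(g0 * ((B y - B x) / (y - x)) + (c y - c x) / (y - x)) = (g0 * (B y - B x) + (c y - c x)) / (y - x)"
      by (simp add: add_divide_distrib)
    also have "\<dots> = (g y - g0) * (\<sigma> (g y) - B y) / (y - x)" using key by simp
    finally have h: "(g0 * ((B y - B x) / (y - x)) + (c y - c x) / (y - x)) = (g y - g0) * (\<sigma> (g y) - B y) / (y - x)" .
    have "((g y - g0) * (\<sigma> (g y) - B y) / (y - x)) / (\<sigma> (g y) - B y) = (g y - g0) / (y - x)"
      using elim(1) by simp
    then show ?case using h unfolding g0_def by simp
  qed
  then have "((\<lambda>y. (g y - g x) / (y - x)) \<longlongrightarrow> (g0 * B' + c') / (cosh g0 - B x)) (at x)"
    by (rule Lim_transform_eventually[OF tQ])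
  then show ?thesis unfolding has_field_derivative_iff g0_def .
qed


definition Ef :: "real \<Rightarrow> real \<Rightarrow> real" where "Ef u K = cosh u - K"
definition yf :: "real \<Rightarrow> real \<Rightarrow> real" where "yf u K = sinh u - K * u"
definition emf :: "real \<Rightarrow> real" where "emf u = cosh u - sinh u"
definition Wf :: "real \<Rightarrow> real \<Rightarrow> real" where "Wf u K = (1 + K\<^sup>2) * sinh u - 2 * K * u"
definition Nf :: "real \<Rightarrow> real \<Rightarrow> real" where
  "Nf u K = - (1 + 3 * K\<^sup>2) + K * (3 + K\<^sup>2) * cosh u - 2 * K * sinh u * u"

context
  fixes u K :: real
  assumes u0: "0 < u" and K0: "0 < K" and K1: "K < 1"
begin

abbreviation "hS \<equiv> sinh u"
abbreviation "hC \<equiv> cosh u"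
abbreviation "hE \<equiv> Ef u K"
abbreviation "hy \<equiv> yf u K"
abbreviation "hem \<equiv> emf u"
abbreviation "hW \<equiv> Wf u K"
abbreviation "hN \<equiv> Nf u K"

lemma S_ge: "u \<le> hS" using sinh_ge_self u0 by simp
lemma S_pos: "0 < hS" using u0 by simp
lemma C_ge1: "1 \<le> hC" by (rule cosh_real_ge_1)
lemma S_le_C: "hS \<le> hC" by (rule sinh_le_cosh_real)
lemma em_exp: "hem = exp (- u)" unfolding emf_def by (rule cosh_minus_sinh)
lemma em_pos: "0 < hem" unfolding em_exp by simp
lemma emf_le1: "hem \<le> 1" unfolding em_exp using u0 by simp
lemma em_ge': "1 - u \<le> hem" unfolding em_exp by (rule em_ge)
lemma E_ge_eps: "1 - K \<le> hE" using C_ge1 unfolding Ef_def by simp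
lemma E_pos: "0 < hE" using E_ge_eps K1 by simp
lemma E_ge_C1: "hC - 1 \<le> hE" using K1 unfolding Ef_def by simp
lemma epsC: "(1 - K) * hC \<le> hE"
proof -
  have "K * 1 \<le> K * hC" using C_ge1 K0 by (intro mult_left_mono) auto
  then show ?thesis unfolding Ef_def by (simp add: algebra_simps)
qed
lemma epsS: "(1 - K) * hS \<le> hE"
proof -
  have "(1 - K) * hS \<le> (1 - K) * hC" using S_le_C K1 by (intro mult_left_mono) auto
  then show ?thesis using epsC by simp
qed
lemma y_pos: "0 < hy"
proof -
  have "K * u < 1 * u" using K1 u0 by (intro mult_strict_right_mono) auto
  then show ?thesis using S_ge unfolding yf_def by simp
qed
lemma y_le_E: "hy \<le> hE"
proof -
  have "K * (1 - u) \<le> hem"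
  proof (cases "1 \<le> u")
    case True
    then have "K * (1 - u) \<le> 0" using K0 by (simp add: mult_nonneg_nonpos)
    then show ?thesis using em_pos by simp
  next
    case False
    then have "K * (1 - u) \<le> 1 * (1 - u)" using K1 by (intro mult_right_mono) auto
    then show ?thesis using em_ge' by simp
  qed
  then show ?thesis unfolding yf_def Ef_def emf_def by (simp add: algebra_simps)
qed
lemma y_le_uE: "hy \<le> u * hE"
proof -
  have "hS - u \<le> u * (hC - 1)" using sinh_le_u_cosh[of u] u0 by (simp add: algebra_simps)
  then show ?thesis unfolding yf_def Ef_def by (simp add: algebra_simps)
qed
lemma absKC: "\<bar>1 - K * hC\<bar> \<le> hE"
proof -
  have h1: "K * 1 \<le> K * hC" using C_ge1 K0 by (intro mult_left_mono) auto
  have h2: "K * hC \<le> 1 * hC" using K1 C_ge1 by (intro mult_right_mono) auto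
  show ?thesis unfolding abs_le_iff Ef_def using h1 h2 C_ge1 K1 by linarith
qed
lemma absKem: "\<bar>K - hem\<bar> \<le> 1"
  using em_pos emf_le1 K0 K1 by (simp add: abs_le_iff)

lemma u2_le: "u\<^sup>2 \<le> 2 * (hC - 1)"
  using cosh_ge_quad[of u] u0 by simp

lemma S3: "1 \<le> u \<Longrightarrow> hS \<le> 3 * hE"
  using S_le_C cosh_big[of u] E_ge_C1 by simp
lemma C3: "1 \<le> u \<Longrightarrow> hC \<le> 3 * hE"
  using cosh_big[of u] E_ge_C1 by simp

lemma Kem_S: "\<bar>K - hem\<bar> * hS \<le> 5 * hE"
proof (cases "1 \<le> u")
  case True
  have "\<bar>K - hem\<bar> * hS \<le> 1 * hS" using absKem S_pos by (intro mult_right_mono) auto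
  also have "\<dots> \<le> 3 * hE" using S3[OF True] by simp
  also have "\<dots> \<le> 5 * hE" using E_pos by simp
  finally show ?thesis .
next
  case False
  then have u1: "u \<le> 1" by simp
  have a: "\<bar>K - hem\<bar> \<le> (1 - K) + u" using em_ge' emf_le1 K1 by (simp add: abs_le_iff)
  have "\<bar>K - hem\<bar> * hS \<le> ((1 - K) + u) * hS" using a S_pos by (intro mult_right_mono) auto
  also have "\<dots> = (1 - K) * hS + u * hS" by (simp add: algebra_simps)
  also have "u * hS \<le> u * (2 * u)" using sinh_le_2u[of u] u0 u1 by (intro mult_left_mono) auto
  also have "u * (2 * u) = 2 * u\<^sup>2" by (simp add: power2_eq_square)
  also have "(1 - K) * hS + 2 * u\<^sup>2 \<le> hE + 4 * hE" using epsS u2_le E_ge_C1 by simp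
  finally show ?thesis by simp
qed

lemma Sy: "hS * hy \<le> 4 * hE\<^sup>2"
proof (cases "1 \<le> u")
  case True
  have "hS * hy \<le> (3 * hE) * hE" using S3[OF True] y_le_E y_pos E_pos by (intro mult_mono) auto
  also have "\<dots> \<le> 4 * hE\<^sup>2" using E_pos by (simp add: power2_eq_square)
  finally show ?thesis .
next
  case False
  then have u1: "u \<le> 1" by simp
  have "hS * hy \<le> (2 * u) * (u * hE)"
    using sinh_le_2u[of u] u0 u1 y_le_uE y_pos E_pos by (intro mult_mono) auto
  also have "\<dots> = 2 * u\<^sup>2 * hE" by (simp add: power2_eq_square)
  also have "\<dots> \<le> 2 * (2 * hE) * hE"
    using u2_le E_ge_C1 E_pos by (intro mult_right_mono) auto
  finally show ?thesis by (simp add: power2_eq_square)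
qed

lemma Su: "hS * u \<le> 4 * (1 + u) * hE"
proof (cases "1 \<le> u")
  case True
  have "hS * u \<le> (3 * hE) * u" using S3[OF True] u0 by (intro mult_right_mono) auto
  also have "\<dots> \<le> 4 * (1 + u) * hE" using E_pos u0 by (simp add: algebra_simps)
  finally show ?thesis .
next
  case False
  then have u1: "u \<le> 1" by simp
  have "hS * u \<le> (2 * u) * u" using sinh_le_2u[of u] u0 u1 by (intro mult_right_mono) auto
  also have "\<dots> = 2 * u\<^sup>2" by (simp add: power2_eq_square)
  also have "\<dots> \<le> 4 * hE" using u2_le E_ge_C1 by simp
  also have "\<dots> \<le> 4 * (1 + u) * hE" using E_pos u0 by (simp add: algebra_simps)
  finally show ?thesis .
qed

lemma Cuy: "hC * u * hy \<le> 8 * (1 + u) * hE\<^sup>2"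
proof (cases "1 \<le> u")
  case True
  have "hC * hy \<le> (3 * hE) * hE" using C3[OF True] y_le_E y_pos E_pos by (intro mult_mono) auto
  then have "(hC * hy) * u \<le> ((3 * hE) * hE) * u" using u0 by (intro mult_right_mono) auto
  also have "\<dots> \<le> 8 * (1 + u) * hE\<^sup>2" using E_pos u0 by (simp add: algebra_simps power2_eq_square)
  finally show ?thesis by (simp add: algebra_simps)
next
  case False
  then have u1: "u \<le> 1" by simp
  have C2: "hC \<le> 2" using cosh_le2[of u] u0 u1 by simp
  have "u * hy \<le> hS * hy" using S_ge y_pos by (intro mult_right_mono) auto
  also have "\<dots> \<le> 4 * hE\<^sup>2" by (rule Sy)
  finally have uy: "u * hy \<le> 4 * hE\<^sup>2" .
  have "hC * (u * hy) \<le> 2 * (4 * hE\<^sup>2)" using C2 uy u0 y_pos by (rule_tac mult_mono) auto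
  also have "\<dots> \<le> 8 * (1 + u) * hE\<^sup>2" using u0 by (simp add: algebra_simps)
  finally show ?thesis by (simp add: algebra_simps)
qed

lemma W_nonneg: "0 \<le> hW"
proof -
  have "2 * K * u \<le> 2 * K * hS" using S_ge K0 by (intro mult_left_mono) auto
  also have "\<dots> \<le> (1 + K\<^sup>2) * hS"
  proof (intro mult_right_mono)
    show "2 * K \<le> 1 + K\<^sup>2" using sum_power2_ge_zero[of "1 - K" 0]
      by (simp add: power2_eq_square algebra_simps)
  qed (use S_pos in auto)
  finally show ?thesis unfolding Wf_def by simp
qed

lemma W_le: "hW \<le> 2 * hy"
proof -
  have "0 \<le> (1 - K\<^sup>2) * hS" using K0 K1 S_pos
    by (intro mult_nonneg_nonneg) (auto simp: power2_eq_square mult_le_one)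
  then show ?thesis unfolding Wf_def yf_def by (simp add: algebra_simps)
qed

lemma N1_eq: "hN = K * (3 + K\<^sup>2) * (hC - 1) - 2 * K * hS * u - (1 - K)^3"
  unfolding Nf_def by (simp add: algebra_simps power2_eq_square power3_eq_cube)

lemma N1_bound: "\<bar>hN\<bar> \<le> 13 * (1 + u) * hE"
proof -
  have t1: "\<bar>K * (3 + K\<^sup>2) * (hC - 1)\<bar> \<le> 4 * hE"
  proof -
    have k: "K * (3 + K\<^sup>2) \<le> 4"
    proof -
      have "K\<^sup>2 \<le> 1" using K0 K1 by (simp add: power2_eq_square mult_le_one)
      then have "K * (3 + K\<^sup>2) \<le> 1 * (3 + 1)" using K0 K1 by (intro mult_mono) auto
      then show ?thesis by simp
    qed
    have "\<bar>K * (3 + K\<^sup>2) * (hC - 1)\<bar> = K * (3 + K\<^sup>2) * (hC - 1)" using K0 C_ge1 by simp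
    also have "\<dots> \<le> 4 * (hC - 1)" using k C_ge1 by (intro mult_right_mono) auto
    also have "\<dots> \<le> 4 * hE" using E_ge_C1 by simp
    finally show ?thesis .
  qed
  have t2: "\<bar>2 * K * hS * u\<bar> \<le> 8 * (1 + u) * hE"
  proof -
    have "\<bar>2 * K * hS * u\<bar> = 2 * K * (hS * u)" using K0 S_pos u0 by (simp add: abs_mult)
    also have "\<dots> \<le> 2 * 1 * (hS * u)" using K1 S_pos u0 by (intro mult_right_mono mult_left_mono) auto
    also have "\<dots> \<le> 2 * (4 * (1 + u) * hE)" using Su by simp
    finally show ?thesis by (simp add: algebra_simps)
  qed
  have t3: "\<bar>(1 - K)^3\<bar> \<le> hE"
  proof -
    have "(1 - K)^3 \<le> (1 - K)" using K0 K1 by (simp add: power_le_one power3_eq_cube mult_le_one)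
    then show ?thesis using K1 E_ge_eps by simp
  qed
  have "\<bar>hN\<bar> \<le> \<bar>K * (3 + K\<^sup>2) * (hC - 1)\<bar> + \<bar>2 * K * hS * u\<bar> + \<bar>(1 - K)^3\<bar>"
    unfolding N1_eq by linarith
  also have "\<dots> \<le> 4 * hE + 8 * (1 + u) * hE + hE" using t1 t2 t3 by linarith
  also have "\<dots> \<le> 13 * (1 + u) * hE" using E_pos u0 by (simp add: algebra_simps)
  finally show ?thesis .
qed

lemma y_ge_Su: "hS - u \<le> hy"
proof -
  have "K * u \<le> 1 * u" using K1 u0 by (intro mult_right_mono) auto
  then show ?thesis unfolding yf_def by simp
qed

lemma u_log: "u \<le> 7 + ln (1 + hy)"
proof (cases "u \<le> 7")
  case True
  have "0 \<le> ln (1 + hy)" using y_pos by simp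
  then show ?thesis using True by linarith
next
  case False
  have "exp u / 4 \<le> hS - u" using u_big_bound[of u] False by simp
  also have "\<dots> \<le> hy" by (rule y_ge_Su)
  finally have "exp u \<le> 4 * (1 + hy)" using y_pos by simp
  then have "ln (exp u) \<le> ln (4 * (1 + hy))" using y_pos by (subst ln_le_cancel_iff) auto
  also have "ln (4 * (1 + hy)) = ln 4 + ln (1 + hy)" by (rule ln_mult_pos) (use y_pos in auto)
  also have "ln (4::real) \<le> 4 - 1" by (rule ln_le_minus_one) simp
  finally show ?thesis by simp
qed

lemma C_bound: "hC \<le> exp 7 + 4 * hy"
proof -
  have Ce: "hC \<le> exp u"
  proof -
    have "exp (-u) \<le> exp u" using u0 by simp
    then show ?thesis by (simp add: cosh_field_def)
  qed
  show ?thesis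
  proof (cases "u \<le> 7")
    case True
    then have "exp u \<le> exp 7" by simp
    then show ?thesis using Ce y_pos by (smt (verit))
  next
    case False
    have "exp u / 4 \<le> hS - u" using u_big_bound[of u] False by simp
    also have "\<dots> \<le> hy" by (rule y_ge_Su)
    finally have "exp u \<le> 4 * hy" by simp
    moreover have "0 < exp (7::real)" by simp
    ultimately show ?thesis using Ce by linarith
  qed
qed

end

lemma absdiv_le: "0 < (E::real) \<Longrightarrow> \<bar>X\<bar> \<le> c * E \<Longrightarrow> \<bar>X / E\<bar> \<le> c"
  by (simp add: pos_divide_le_eq)

lemma mm: "(a::real) \<le> b \<Longrightarrow> c \<le> d \<Longrightarrow> 0 \<le> a \<Longrightarrow> 0 \<le> c \<Longrightarrow> a * c \<le> b * d"
  by (meson mult_mono order_trans)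

context
  fixes S C E em W N T y u K AU :: real
  assumes u0: "0 < u" and K0: "0 < K" and K1: "K < 1" and S0: "0 < S" and C1: "1 \<le> C"
    and E0: "0 < E" and em0: "0 < em" and em1: "em \<le> 1"
    and T0: "0 \<le> T" and T2: "T \<le> 2 * y" and yE: "y \<le> E" and y0: "0 < y"
    and W0: "0 \<le> W" and W2: "W \<le> 2 * y" and AU: "AU = (T + W) / E"
    and eC: "(1 - K) * C \<le> E" and eS: "(1 - K) * S \<le> E" and eE: "1 - K \<le> E"
    and Kem1: "\<bar>K - em\<bar> \<le> 1" and KemS: "\<bar>K - em\<bar> * S \<le> 5 * E"
    and Sy: "S * y \<le> 4 * E\<^sup>2" and Cuy: "C * u * y \<le> 8 * (1 + u) * E\<^sup>2"
    and Nb: "\<bar>N\<bar> \<le> 13 * (1 + u) * E"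
begin

lemma TE: "T \<le> 2 * E" using T2 yE by simp
lemma TW: "T + W \<le> 4 * E" using T2 W2 yE by simp
lemma TWy: "T + W \<le> 4 * y" using T2 W2 by simp
lemma AU0: "0 \<le> AU" using AU T0 W0 E0 by simp
lemma AU4: "AU \<le> 4" using AU TW E0 by (simp add: divide_le_eq)
lemma AUE: "AU * E = T + W" using AU E0 by simp
lemma K1': "K \<le> 1" using K1 by simp
lemma Ksq1: "K\<^sup>2 \<le> 1" using K0 K1 by (simp add: power2_eq_square mult_le_one)
lemma omK: "0 \<le> 1 - K\<^sup>2" using Ksq1 by simp
lemma omK2: "1 - K\<^sup>2 \<le> 2 * (1 - K)"
proof -
  have "1 - K\<^sup>2 = (1 - K) * (1 + K)" by (simp add: algebra_simps power2_eq_square)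
  also have "\<dots> \<le> (1 - K) * 2" using K1 K1' by (intro mult_left_mono) auto
  finally show ?thesis by simp
qed
lemma KomK: "K * (1 - K\<^sup>2) \<le> 1"
proof -
  have "K * (1 - K\<^sup>2) \<le> 1 * 1" using K1' omK K0 Ksq1 by (intro mm) auto
  then show ?thesis by simp
qed
lemma KomK0: "0 \<le> K * (1 - K\<^sup>2)" using K0 omK by simp
lemma KomK2: "K * (1 - K\<^sup>2) \<le> 2 * E"
proof -
  have "K * (1 - K\<^sup>2) \<le> 1 * (2 * (1 - K))" using K1' omK2 K0 omK by (intro mm) auto
  then show ?thesis using eE by simp
qed
lemma SAU: "S * AU \<le> 16 * E"
proof -
  have "S * (T + W) \<le> S * (4 * y)" using TWy S0 by (intro mult_left_mono) auto
  also have "\<dots> \<le> 16 * E\<^sup>2" using Sy by simp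
  finally have a: "S * (T + W) \<le> 16 * E\<^sup>2" .
  have b: "S * AU * E = S * (T + W)" using AUE by (metis mult.assoc)
  have "(S * AU) * E \<le> (16 * E) * E" using a b by (simp only: power2_eq_square mult.assoc)
  then show ?thesis using E0 by (simp add: mult_le_cancel_right_pos)
qed
lemma SAU0: "0 \<le> S * AU" using S0 AU0 by simp

lemma z1: "\<bar>- (T * K * (1 - K\<^sup>2)) / E\<bar> \<le> 2"
proof (rule absdiv_le[OF E0])
  have p: "0 \<le> T * (K * (1 - K\<^sup>2))" using T0 KomK0 by simp
  have "T * (K * (1 - K\<^sup>2)) \<le> T * 1" using KomK T0 by (intro mult_left_mono) auto
  then have "\<bar>- (T * (K * (1 - K\<^sup>2)))\<bar> \<le> 2 * E" using TE p by simp
  then show "\<bar>- (T * K * (1 - K\<^sup>2))\<bar> \<le> 2 * E" by (simp add: mult.assoc)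
qed

lemma z2: "\<bar>T * em * AU / E\<bar> \<le> 8"
proof (rule absdiv_le[OF E0])
  have p: "0 \<le> T * em * AU" using T0 em0 AU0 by simp
  have "T * em * AU \<le> (2 * E) * 1 * 4" using TE em1 AU4 T0 em0 AU0 E0
    by (intro mm) auto
  then show "\<bar>T * em * AU\<bar> \<le> 8 * E" using p by simp
qed

lemma z3: "\<bar>6 * K\<^sup>2 * (1 - K\<^sup>2) / E\<bar> \<le> 12"
proof (rule absdiv_le[OF E0])
  have p: "0 \<le> 6 * K\<^sup>2 * (1 - K\<^sup>2)" using omK by simp
  have "K\<^sup>2 * (1 - K\<^sup>2) \<le> 1 * (2 * (1 - K))" using Ksq1 omK2 omK by (intro mm) auto
  then have "6 * K\<^sup>2 * (1 - K\<^sup>2) \<le> 12 * E" using eE by simp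
  then show "\<bar>6 * K\<^sup>2 * (1 - K\<^sup>2)\<bar> \<le> 12 * E" using p by simp
qed

lemma z4: "\<bar>3 * (1 + K\<^sup>2) * K * (1 - K\<^sup>2) * C / E\<bar> \<le> 12"
proof (rule absdiv_le[OF E0])
  have p: "0 \<le> 3 * (1 + K\<^sup>2) * K * (1 - K\<^sup>2) * C" using omK K0 C1 by simp
  have a: "(1 + K\<^sup>2) * K \<le> 2 * 1" using Ksq1 K1' K0 by (intro mm) auto
  have b: "(1 - K\<^sup>2) * C \<le> (2 * (1 - K)) * C" using omK2 C1 by (intro mult_right_mono) auto
  have "((1 + K\<^sup>2) * K) * ((1 - K\<^sup>2) * C) \<le> (2 * 1) * ((2 * (1 - K)) * C)"
    using a b K0 omK C1 by (intro mm) auto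
  also have "\<dots> = 4 * ((1 - K) * C)" by (simp add: algebra_simps)
  also have "\<dots> \<le> 4 * E" using eC by simp
  finally have "((1 + K\<^sup>2) * K) * ((1 - K\<^sup>2) * C) \<le> 4 * E" .
  then have "3 * (1 + K\<^sup>2) * K * (1 - K\<^sup>2) * C \<le> 12 * E" by (simp add: algebra_simps)
  then show "\<bar>3 * (1 + K\<^sup>2) * K * (1 - K\<^sup>2) * C\<bar> \<le> 12 * E" using p by simp
qed

lemma z5: "\<bar>K * (3 + K\<^sup>2) * S * AU / E\<bar> \<le> 64"
proof (rule absdiv_le[OF E0])
  have p: "0 \<le> (K * (3 + K\<^sup>2)) * (S * AU)" using K0 SAU0 by simp
  have k: "K * (3 + K\<^sup>2) \<le> 1 * 4" using K1' Ksq1 K0 by (intro mm) auto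
  have "(K * (3 + K\<^sup>2)) * (S * AU) \<le> (1 * 4) * (16 * E)"
    using k K0 SAU SAU0 by (rule_tac mm) auto
  then have "\<bar>(K * (3 + K\<^sup>2)) * (S * AU)\<bar> \<le> 64 * E" using p by simp
  then show "\<bar>K * (3 + K\<^sup>2) * S * AU\<bar> \<le> 64 * E" by (simp add: mult.assoc)
qed

lemma z6: "\<bar>2 * K * (1 - K\<^sup>2) * S * u / E\<bar> \<le> 4 * u"
proof (rule absdiv_le[OF E0])
  have p: "0 \<le> 2 * K * (1 - K\<^sup>2) * S * u" using K0 omK S0 u0 by simp
  have a: "K * ((1 - K\<^sup>2) * S) \<le> 1 * ((2 * (1 - K)) * S)"
    using K1' K0 omK2 S0 omK by (intro mm mult_right_mono) auto
  have "2 * K * (1 - K\<^sup>2) * S * u = 2 * u * (K * ((1 - K\<^sup>2) * S))" by (simp add: algebra_simps)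
  also have "\<dots> \<le> 2 * u * (1 * ((2 * (1 - K)) * S))" using a u0 by (intro mult_left_mono) auto
  also have "\<dots> = 4 * u * ((1 - K) * S)" by (simp add: algebra_simps)
  also have "\<dots> \<le> 4 * u * E" using eS u0 by (intro mult_left_mono) auto
  finally show "\<bar>2 * K * (1 - K\<^sup>2) * S * u\<bar> \<le> 4 * u * E" using p by simp
qed

lemma z7: "\<bar>2 * K * (C * u + S) * AU / E\<bar> \<le> 96 * (1 + u)"
proof -
  have p: "0 \<le> 2 * K * (C * u + S) * AU" using K0 C1 u0 S0 AU0 by simp
  have "(C * u + S) * (T + W) \<le> (C * u + S) * (4 * y)"
    using TWy C1 u0 S0 by (intro mult_left_mono) auto
  also have "\<dots> = 4 * (C * u * y + S * y)" by (simp add: algebra_simps)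
  also have "\<dots> \<le> 4 * (8 * (1 + u) * E\<^sup>2 + 4 * E\<^sup>2)" using Cuy Sy by simp
  also have "\<dots> = (32 * (1 + u) + 16) * E\<^sup>2" by (simp add: algebra_simps)
  finally have a: "(C * u + S) * (T + W) \<le> (32 * (1 + u) + 16) * E\<^sup>2" .
  have b: "(C * u + S) * AU * E = (C * u + S) * (T + W)" using AUE by (metis mult.assoc)
  have "((C * u + S) * AU) * E \<le> ((32 * (1 + u) + 16) * E) * E"
    using a b by (simp only: power2_eq_square mult.assoc)
  then have c: "(C * u + S) * AU \<le> (32 * (1 + u) + 16) * E" using E0 by (simp add: mult_le_cancel_right_pos)
  have k: "2 * K \<le> 2 * 1" using K1' by simp
  have "(2 * K) * ((C * u + S) * AU) \<le> (2 * 1) * ((32 * (1 + u) + 16) * E)"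
    using k K0 c C1 u0 S0 AU0 by (rule_tac mm) auto
  also have "\<dots> \<le> 96 * (1 + u) * E" using E0 u0 by (simp add: algebra_simps)
  finally have "\<bar>2 * K * (C * u + S) * AU\<bar> \<le> 96 * (1 + u) * E" using p by (simp add: mult.assoc)
  then show ?thesis by (rule absdiv_le[OF E0])
qed

lemma z8: "\<bar>(2 + K\<^sup>2) * N / E\<bar> \<le> 39 * (1 + u)"
proof (rule absdiv_le[OF E0])
  have "\<bar>(2 + K\<^sup>2) * N\<bar> = (2 + K\<^sup>2) * \<bar>N\<bar>" by (simp add: abs_mult)
  also have "\<dots> \<le> 3 * (13 * (1 + u) * E)" using Ksq1 Nb by (rule_tac mm) auto
  also have "\<dots> = 39 * (1 + u) * E" by (simp add: algebra_simps)
  finally show "\<bar>(2 + K\<^sup>2) * N\<bar> \<le> 39 * (1 + u) * E" .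
qed

lemma absdiv2_le: "\<bar>X\<bar> \<le> c * E\<^sup>2 \<Longrightarrow> \<bar>X / E\<^sup>2\<bar> \<le> c"
  using E0 by (simp add: pos_divide_le_eq)

lemma z9: "\<bar>T * (K - em) * (S * AU + K * (1 - K\<^sup>2)) / E\<^sup>2\<bar> \<le> 44"
proof (rule absdiv2_le)
  have "\<bar>T * (K - em) * (S * AU + K * (1 - K\<^sup>2))\<bar> = T * \<bar>K - em\<bar> * (S * AU + K * (1 - K\<^sup>2))"
    using T0 SAU0 KomK0 by (simp add: abs_mult)
  also have "\<dots> = T * (\<bar>K - em\<bar> * S) * AU + T * \<bar>K - em\<bar> * (K * (1 - K\<^sup>2))"
    by (simp add: algebra_simps)
  also have "T * (\<bar>K - em\<bar> * S) * AU \<le> (2 * E) * (5 * E) * 4"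
  proof (rule mm)
    show "T * (\<bar>K - em\<bar> * S) \<le> 2 * E * (5 * E)" using TE KemS T0 S0 by (rule_tac mm) auto
  qed (use AU4 T0 AU0 S0 in auto)
  also have "T * \<bar>K - em\<bar> * (K * (1 - K\<^sup>2)) \<le> (2 * E) * 1 * (2 * E)"
  proof (rule mm)
    show "T * \<bar>K - em\<bar> \<le> 2 * E * 1" using TE Kem1 T0 by (rule_tac mm) auto
  qed (use KomK2 KomK0 T0 in auto)
  finally show "\<bar>T * (K - em) * (S * AU + K * (1 - K\<^sup>2))\<bar> \<le> 44 * E\<^sup>2"
    by (simp add: power2_eq_square algebra_simps)
qed

lemma z10: "\<bar>N * (S * AU + K * (1 - K\<^sup>2)) / E\<^sup>2\<bar> \<le> 234 * (1 + u)"
proof (rule absdiv2_le)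
  have a: "S * AU + K * (1 - K\<^sup>2) \<le> 18 * E" using SAU KomK2 by simp
  have "\<bar>N * (S * AU + K * (1 - K\<^sup>2))\<bar> = \<bar>N\<bar> * (S * AU + K * (1 - K\<^sup>2))"
    using SAU0 KomK0 by (simp add: abs_mult)
  also have "\<dots> \<le> (13 * (1 + u) * E) * (18 * E)"
    using Nb a SAU0 KomK0 by (rule_tac mm) auto
  finally show "\<bar>N * (S * AU + K * (1 - K\<^sup>2))\<bar> \<le> 234 * (1 + u) * E\<^sup>2"
    by (simp add: power2_eq_square algebra_simps)
qed

lemma c3: "\<bar>K - em\<bar> * T \<le> 2 * E"
proof -
  have "\<bar>K - em\<bar> * T \<le> 1 * (2 * E)" using Kem1 TE T0 by (rule_tac mm) auto
  then show ?thesis by simp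
qed

lemma c4: "\<bar>(T * (K - em) + N) / E\<bar> \<le> 15 * (1 + u)"
proof (rule absdiv_le[OF E0])
  have tt: "\<bar>T * (K - em)\<bar> = \<bar>K - em\<bar> * T" using T0 by (simp add: abs_mult)
  have "\<bar>T * (K - em) + N\<bar> \<le> \<bar>K - em\<bar> * T + \<bar>N\<bar>" using abs_triangle_ineq[of "T * (K - em)" N] tt by linarith
  also have "\<dots> \<le> 2 * E + 13 * (1 + u) * E" using c3 Nb by simp
  also have "\<dots> \<le> 15 * (1 + u) * E" using E0 u0 by (simp add: algebra_simps)
  finally show "\<bar>T * (K - em) + N\<bar> \<le> 15 * (1 + u) * E" .
qed

lemma c5: assumes KC: "\<bar>1 - K * C\<bar> \<le> E" shows "T\<^sup>2 * \<bar>1 - K * C\<bar> \<le> 4 * E ^ 3"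
proof -
  have "T\<^sup>2 \<le> (2 * E)\<^sup>2" using TE T0 by (intro power_mono) auto
  then have "T\<^sup>2 * \<bar>1 - K * C\<bar> \<le> (2 * E)\<^sup>2 * E" using KC by (rule_tac mm) auto
  then show ?thesis by (simp add: power2_eq_square power3_eq_cube)
qed

lemma c6: assumes KC: "\<bar>1 - K * C\<bar> \<le> E"
  shows "T * \<bar>(1 - K * C) * (T + W) - S * K * (1 - K\<^sup>2) * E\<bar> \<le> 12 * E ^ 3"
proof -
  have a: "\<bar>(1 - K * C) * (T + W)\<bar> \<le> E * (4 * E)"
    using KC TW T0 W0 by (simp add: abs_mult) (rule_tac mm, auto)
  have b0: "0 \<le> S * K * (1 - K\<^sup>2) * E" using S0 K0 omK E0 by simp
  have "S * K * (1 - K\<^sup>2) = K * ((1 - K\<^sup>2) * S)" by (simp add: algebra_simps)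
  also have "\<dots> \<le> 1 * ((2 * (1 - K)) * S)" using K1' K0 omK2 S0 omK by (intro mm mult_right_mono) auto
  also have "\<dots> = 2 * ((1 - K) * S)" by (simp add: algebra_simps)
  also have "\<dots> \<le> 2 * E" using eS by simp
  finally have b1: "S * K * (1 - K\<^sup>2) \<le> 2 * E" .
  have b: "S * K * (1 - K\<^sup>2) * E \<le> (2 * E) * E" using b1 E0 by (intro mult_right_mono) auto
  have "\<bar>(1 - K * C) * (T + W) - S * K * (1 - K\<^sup>2) * E\<bar> \<le> E * (4 * E) + (2 * E) * E"
    using a b b0 by linarith
  also have "\<dots> = 6 * E\<^sup>2" by (simp add: power2_eq_square)
  finally have c: "\<bar>(1 - K * C) * (T + W) - S * K * (1 - K\<^sup>2) * E\<bar> \<le> 6 * E\<^sup>2" .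
  have "T * \<bar>(1 - K * C) * (T + W) - S * K * (1 - K\<^sup>2) * E\<bar> \<le> (2 * E) * (6 * E\<^sup>2)"
    using TE c T0 by (rule_tac mm) auto
  then show ?thesis by (simp add: power2_eq_square power3_eq_cube)
qed

lemma sum10: fixes a1 a2 a3 a4 a5 a6 a7 a8 a9 a10 :: real
  assumes "\<bar>a1\<bar> \<le> b1" "\<bar>a2\<bar> \<le> b2" "\<bar>a3\<bar> \<le> b3" "\<bar>a4\<bar> \<le> b4" "\<bar>a5\<bar> \<le> b5"
    "\<bar>a6\<bar> \<le> b6" "\<bar>a7\<bar> \<le> b7" "\<bar>a8\<bar> \<le> b8" "\<bar>a9\<bar> \<le> b9" "\<bar>a10\<bar> \<le> b10"
  shows "\<bar>a1 + a2 + a3 - a4 + a5 + a6 - a7 - a8 - a9 - a10\<bar> \<le> b1 + b2 + b3 + b4 + b5 + b6 + b7 + b8 + b9 + b10"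
  using assms by (simp add: abs_le_iff)

lemma Zbound_abs:
  shows "\<bar>- (T * K * (1 - K\<^sup>2)) / E + T * em * AU / E + 6 * K\<^sup>2 * (1 - K\<^sup>2) / E
     - 3 * (1 + K\<^sup>2) * K * (1 - K\<^sup>2) * C / E + K * (3 + K\<^sup>2) * S * AU / E
     + 2 * K * (1 - K\<^sup>2) * S * u / E - 2 * K * (C * u + S) * AU / E - (2 + K\<^sup>2) * N / E
     - T * (K - em) * (S * AU + K * (1 - K\<^sup>2)) / E\<^sup>2 - N * (S * AU + K * (1 - K\<^sup>2)) / E\<^sup>2\<bar>
     \<le> 600 * (1 + u)"
proof -
  have "2 + 8 + 12 + 12 + 64 + 4 * u + 96 * (1 + u) + 39 * (1 + u) + 44 + 234 * (1 + u) \<le> 600 * (1 + u)"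
    using u0 by simp
  then show ?thesis using sum10[OF z1 z2 z3 z4 z5 z6 z7 z8 z9 z10] by linarith
qed

end

lemma link:
  fixes r t T y u :: real
  assumes r0: "0 < r" and t0: "0 < t" and TT: "T = t / r" and y0: "0 < y" and yT: "y \<le> 3 / 2 * T"
    and ul: "u \<le> 7 + ln (1 + y)" and u0: "0 < u"
  shows "r * (1 + u) \<le> 29 * (japan r * ln (japan t))"
proof -
  have T0: "0 < T" using TT r0 t0 by simp
  have "1 + y \<le> 1 + 2 * T" using yT T0 by simp
  also have "\<dots> \<le> (1 + 2 * t) * (1 + 1 / r)"
  proof -
    have "(1 + 2 * t) * (1 + 1 / r) = 1 + 2 * T + (1 / r + 2 * t)" using TT r0 by (simp add: field_simps)
    then show ?thesis using r0 t0 by simp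
  qed
  finally have a: "1 + y \<le> (1 + 2 * t) * (1 + 1 / r)" .
  have "ln (1 + y) \<le> ln ((1 + 2 * t) * (1 + 1 / r))"
    using a y0 by (subst ln_le_cancel_iff) auto
  also have "\<dots> = ln (1 + 2 * t) + ln (1 + 1 / r)" using t0 r0 by (intro ln_mult_pos) (auto simp: add_pos_pos)
  finally have b: "ln (1 + y) \<le> ln (1 + 2 * t) + ln (1 + 1 / r)" .
  have c: "ln (1 + 1 / r) \<le> 1 / r" using r0 by (intro ln_add_one_self_le_self) auto
  have d0: "1 + 2 * t \<le> 2 + t\<^sup>2" using sum_power2_ge_zero[of "t - 1" 0] by (simp add: power2_eq_square algebra_simps)
  have jt: "ln (japan t) = ln (2 + t\<^sup>2) / 2"
    unfolding japan_def by (simp add: ln_sqrt add_pos_nonneg)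
  have d: "ln (1 + 2 * t) \<le> 2 * ln (japan t)"
  proof -
    have "ln (1 + 2 * t) \<le> ln (2 + t\<^sup>2)" using d0 t0 by (subst ln_le_cancel_iff) auto
    then show ?thesis using jt by simp
  qed
  have L: "1 / 3 \<le> ln (japan t)"
  proof -
    have "ln 2 \<le> ln (2 + t\<^sup>2)" by (simp add: add_pos_nonneg)
    then show ?thesis using jt ln2_ge_two_thirds by simp
  qed
  have jr1: "1 \<le> japan r" unfolding japan_def by simp
  have jrr: "r \<le> japan r" unfolding japan_def using r0
    by (intro real_le_rsqrt) simp
  define L where "L = ln (japan t)"
  have L0: "0 \<le> L" using L unfolding L_def by simp
  have "r * (1 + u) \<le> r * (8 + ln (1 + 2 * t) + ln (1 + 1 / r))" using ul b r0 by (intro mult_left_mono) auto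
  also have "\<dots> = 8 * r + r * ln (1 + 2 * t) + r * ln (1 + 1 / r)" by (simp add: algebra_simps)
  also have "r * ln (1 + 1 / r) \<le> r * (1 / r)" using c r0 by (intro mult_left_mono) auto
  also have "r * (1 / r) = 1" using r0 by simp
  also have "r * ln (1 + 2 * t) \<le> r * (2 * L)" using d r0 unfolding L_def by (intro mult_left_mono) auto
  finally have e: "r * (1 + u) \<le> 8 * r + r * (2 * L) + 1" by simp
  have f1: "8 * r \<le> 24 * (japan r * L)"
  proof -
    have "r * 1 \<le> japan r * (3 * L)" using jrr L r0 unfolding L_def by (intro mm) auto
    moreover have "japan r * (3 * L) = 3 * (japan r * L)" by (simp add: algebra_simps)
    ultimately show ?thesis by linarith
  qed
  have f2: "r * (2 * L) \<le> 2 * (japan r * L)" using jrr L0 by (simp add: mult_right_mono)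
  have f3: "1 \<le> 3 * (japan r * L)"
  proof -
    have "1 * 1 \<le> japan r * (3 * L)" using jr1 L unfolding L_def by (intro mm) auto
    moreover have "japan r * (3 * L) = 3 * (japan r * L)" by (simp add: algebra_simps)
    ultimately show ?thesis by linarith
  qed
  show ?thesis using e f1 f2 f3 unfolding L_def by linarith
qed


definition Uf :: "real \<Rightarrow> real \<Rightarrow> real \<Rightarrow> real \<Rightarrow> real \<Rightarrow> real" where
  "Uf m l t \<theta> a = V (kappa m a l) ((\<theta> + a * t) / pfun m a l)"

lemma id_core:
  fixes S C u K :: real
  assumes SC: "S\<^sup>2 = C\<^sup>2 - 1"
  shows "-(1 + K\<^sup>2) * (C - K)\<^sup>2 + K * (1 - K\<^sup>2) * (C - K) + S * ((1 + K\<^sup>2) * S - 2 * K * u)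
     = - (1 + 3 * K\<^sup>2) + K * (3 + K\<^sup>2) * C - 2 * K * S * u"
proof -
  have "S * ((1 + K\<^sup>2) * S - 2 * K * u) = (1 + K\<^sup>2) * S\<^sup>2 - 2 * K * S * u"
    by (simp add: algebra_simps power2_eq_square)
  then show ?thesis unfolding SC by (simp add: algebra_simps power2_eq_square)
qed

lemma id_D2:
  fixes S C u K T P a t :: real
  assumes SC: "S\<^sup>2 = C\<^sup>2 - 1" and a0: "a \<noteq> 0" and P0: "P \<noteq> 0" and E0: "C - K \<noteq> 0"
    and TT: "T = a * t / P"
  shows "-(P / a) * (1 + K\<^sup>2) * (C - K) + P * (S * ((a * t / P + (1 + K\<^sup>2) * S - 2 * K * u) / (a * (C - K)))
           - (-(K / a) * (1 - K\<^sup>2)))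
     = t + (P / a) * ((T * (K - (C - S)) + (- (1 + 3 * K\<^sup>2) + K * (3 + K\<^sup>2) * C - 2 * K * S * u)) / (C - K))"
proof -
  let ?W = "(1 + K\<^sup>2) * S - 2 * K * u"
  let ?N = "- (1 + 3 * K\<^sup>2) + K * (3 + K\<^sup>2) * C - 2 * K * S * u"
  have tT: "t = P / a * T" using TT a0 P0 by simp
  have L: "-(P / a) * (1 + K\<^sup>2) * (C - K) + P * (S * ((a * t / P + (1 + K\<^sup>2) * S - 2 * K * u) / (a * (C - K))) - (-(K / a) * (1 - K\<^sup>2)))
      = (P / a) * (-(1 + K\<^sup>2) * (C - K) + K * (1 - K\<^sup>2) + S * (T + ?W) / (C - K))"
    unfolding TT[symmetric] using a0 P0 E0 by (simp add: field_simps)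
  have B: "-(1 + K\<^sup>2) * (C - K) + K * (1 - K\<^sup>2) + S * (T + ?W) / (C - K)
      = T + (T * (K - (C - S)) + ?N) / (C - K)"
  proof -
    have "(-(1 + K\<^sup>2) * (C - K) + K * (1 - K\<^sup>2) + S * (T + ?W) / (C - K)) * (C - K)
        = -(1 + K\<^sup>2) * (C - K)\<^sup>2 + K * (1 - K\<^sup>2) * (C - K) + S * ?W + S * T"
      using E0 by (simp add: field_simps power2_eq_square)
    also have "\<dots> = ?N + S * T" using id_core[OF SC, of K u] by simp
    also have "\<dots> = (T + (T * (K - (C - S)) + ?N) / (C - K)) * (C - K)"
      using E0 by (simp add: field_simps)
    finally show ?thesis using E0 by simp
  qed
  have F: "(P / a) * (T + (T * (K - (C - S)) + ?N) / (C - K)) = t + (P / a) * ((T * (K - (C - S)) + ?N) / (C - K))"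
    using tT by (simp add: distrib_left)
  show ?thesis unfolding L B F ..
qed

lemma id_D11:
  fixes S C P K :: real
  assumes SC: "S\<^sup>2 = C\<^sup>2 - 1" and P0: "P \<noteq> 0" and E0: "C - K \<noteq> 0"
  shows "(C / P - S * S / (P * (C - K))) / ((C - K) * (C - K)) = (1 - K * C) / (P * (C - K) ^ 3)"
proof -
  obtain E where E: "E = C - K" by blast
  have E0': "E \<noteq> 0" using E E0 by simp
  have KE: "K = C - E" using E by simp
  have SS: "S * S = C * C - 1" using SC by (simp add: power2_eq_square)
  have "(C / P - S * S / (P * E)) / (E * E) = (1 - (C - E) * C) / (P * E ^ 3)"
    unfolding SS using P0 E0' by (simp add: field_simps power3_eq_cube)
  then show ?thesis unfolding E[symmetric] KE[symmetric] .
qed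

lemma id_D21:
  fixes S C a K A B D :: real
  assumes SC: "S\<^sup>2 = C\<^sup>2 - 1" and a0: "a \<noteq> 0" and E0: "C - K \<noteq> 0"
  shows "(C * (A + B - D) / a - S * (S * (A + B - D) / (a * (C - K)) + K * (1 - K\<^sup>2) / a)) / ((C - K) * (C - K))
    = ((1 - K * C) * (A + (B - D)) - S * K * (1 - K\<^sup>2) * (C - K)) / (a * (C - K) ^ 3)"
proof -
  obtain E where E: "E = C - K" by blast
  have E0': "E \<noteq> 0" using E E0 by simp
  have KE: "K = C - E" using E by simp
  obtain Q where Q: "Q = A + B - D" by blast
  have Q': "A + (B - D) = Q" using Q by simp
  have SS: "S * S = C * C - 1" using SC by (simp add: power2_eq_square)
  have "(C * Q / a - S * (S * Q / (a * E) + (C - E) * (1 - (C - E)\<^sup>2) / a)) / (E * E)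
      = ((1 - (C - E) * C) * Q - S * (C - E) * (1 - (C - E)\<^sup>2) * E) / (a * E ^ 3)"
  proof -
    have "S * (S * Q / (a * E)) = (S * S) * Q / (a * E)" by (simp only: times_divide_eq_right mult.assoc)
    then have h: "S * (S * Q / (a * E)) = (C * C - 1) * Q / (a * E)" unfolding SS .
    have "C * Q / a - S * (S * Q / (a * E) + (C - E) * (1 - (C - E)\<^sup>2) / a)
        = C * Q / a - ((C * C - 1) * Q / (a * E) + S * ((C - E) * (1 - (C - E)\<^sup>2) / a))"
      unfolding distrib_left h by (rule refl)
    then show ?thesis using a0 E0' by (simp only:) (simp add: field_simps power3_eq_cube power2_eq_square)
  qed
  then show ?thesis unfolding Q[symmetric] Q' E[symmetric] KE[symmetric] .
qed

lemma id_D22: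
  fixes P K u S C a T E em N AU :: real
  assumes a0: "a \<noteq> 0" and E0: "E \<noteq> 0" and em: "em = C - S"
  shows "(-(P / a) * (1 + K\<^sup>2) * a - P * 1) / (a * a) * ((T * (K - em) + N) / E)
    + (((T * (2 + K\<^sup>2) / a) * (K - em) + (-(K / a) * (1 - K\<^sup>2) - (S - C) * (AU / a)) * T
        + (- (6 * K * (-(K / a) * (1 - K\<^sup>2))) + ((-(K / a) * (1 - K\<^sup>2)) * (3 + K\<^sup>2) + K * (2 * K * (-(K / a) * (1 - K\<^sup>2)))) * C
           + K * (3 + K\<^sup>2) * (S * (AU / a)) - 2 * ((-(K / a) * (1 - K\<^sup>2)) * S * u + K * (C * (AU / a)) * u + K * S * (AU / a))))
        * E - (T * (K - em) + N) * (S * (AU / a) - (-(K / a) * (1 - K\<^sup>2)))) / (E * E) * (P / a)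
    = (P / a\<^sup>2) * (- (T * K * (1 - K\<^sup>2)) / E + T * em * AU / E + 6 * K\<^sup>2 * (1 - K\<^sup>2) / E
     - 3 * (1 + K\<^sup>2) * K * (1 - K\<^sup>2) * C / E + K * (3 + K\<^sup>2) * S * AU / E
     + 2 * K * (1 - K\<^sup>2) * S * u / E - 2 * K * (C * u + S) * AU / E - (2 + K\<^sup>2) * N / E
     - T * (K - em) * (S * AU + K * (1 - K\<^sup>2)) / E\<^sup>2 - N * (S * AU + K * (1 - K\<^sup>2)) / E\<^sup>2)"
  unfolding em using a0 E0 by (simp add: field_simps power2_eq_square)

definition Zx :: "real \<Rightarrow> real \<Rightarrow> real \<Rightarrow> real \<Rightarrow> real \<Rightarrow> real \<Rightarrow> real" where
  "Zx P K u a tt dummy = (- ((a * tt / P) * K * (1 - K\<^sup>2)) / (cosh u - K) + (a * tt / P) * (cosh u - sinh u) * ((a * tt / P + ((1 + K\<^sup>2) * sinh u - 2 * K * u)) / (cosh u - K)) / (cosh u - K) + 6 * K\<^sup>2 * (1 - K\<^sup>2) / (cosh u - K)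
     - 3 * (1 + K\<^sup>2) * K * (1 - K\<^sup>2) * cosh u / (cosh u - K) + K * (3 + K\<^sup>2) * sinh u * ((a * tt / P + ((1 + K\<^sup>2) * sinh u - 2 * K * u)) / (cosh u - K)) / (cosh u - K)
     + 2 * K * (1 - K\<^sup>2) * sinh u * u / (cosh u - K) - 2 * K * (cosh u * u + sinh u) * ((a * tt / P + ((1 + K\<^sup>2) * sinh u - 2 * K * u)) / (cosh u - K)) / (cosh u - K) - (2 + K\<^sup>2) * (- (1 + 3 * K\<^sup>2) + K * (3 + K\<^sup>2) * cosh u - 2 * K * sinh u * u) / (cosh u - K)
     - (a * tt / P) * (K - (cosh u - sinh u)) * (sinh u * ((a * tt / P + ((1 + K\<^sup>2) * sinh u - 2 * K * u)) / (cosh u - K)) + K * (1 - K\<^sup>2)) / (cosh u - K)\<^sup>2 - (- (1 + 3 * K\<^sup>2) + K * (3 + K\<^sup>2) * cosh u - 2 * K * sinh u * u) * (sinh u * ((a * tt / P + ((1 + K\<^sup>2) * sinh u - 2 * K * u)) / (cosh u - K)) + K * (1 - K\<^sup>2)) / (cosh u - K)\<^sup>2)"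

context
  fixes m l t :: real
  assumes m0: "0 < m" and l0: "0 < l" and t0: "0 < t"
begin

lemma K0: "0 < kappa m a l" using kappa_pos l0 by simp
lemma K1: "a \<noteq> 0 \<Longrightarrow> kappa m a l < 1" using kappa_lt1 m0 l0 by simp
lemma P0: "a \<noteq> 0 \<Longrightarrow> 0 < pfun m a l" using pfun_pos m0 l0 by simp

lemma U_props: assumes a0: "0 < a" and X0: "0 < \<theta> + a * t"
  shows "0 < Uf m l t \<theta> a"
    "sinh (Uf m l t \<theta> a) - kappa m a l * Uf m l t \<theta> a = (\<theta> + a * t) / pfun m a l"
proof -
  have y0: "0 < (\<theta> + a * t) / pfun m a l" using X0 P0[of a] a0 by simp
  show "0 < Uf m l t \<theta> a" unfolding Uf_def using V_pos[OF K0 K1 y0] a0 by simp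
  show "sinh (Uf m l t \<theta> a) - kappa m a l * Uf m l t \<theta> a = (\<theta> + a * t) / pfun m a l"
    unfolding Uf_def using V_prop(2)[OF K0 K1 less_imp_le[OF y0]] a0 by simp
qed

lemma Rtil_eq: assumes a0: "0 < a" and X0: "0 < \<theta> + a * t"
  shows "Rtil m t \<theta> a l = pfun m a l * (cosh (Uf m l t \<theta> a) - kappa m a l)"
proof -
  have y0: "0 \<le> (\<theta> + a * t) / pfun m a l" using X0 P0[of a] a0 by simp
  have Ka: "kappa m a l < 1" using K1 a0 by simp
  have ab: "\<bar>\<theta> + a * t\<bar> = \<theta> + a * t" using X0 by simp
  show ?thesis
    unfolding Rtil_def Rfun_def Uf_def ab Hk_eq[OF K0 Ka y0] by (simp add: algebra_simps)
qed

lemma dU_theta: assumes a0: "0 < a" and X0: "0 < \<theta> + a * t"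
  shows "((\<lambda>\<theta>'. Uf m l t \<theta>' a) has_real_derivative
     1 / (pfun m a l * (cosh (Uf m l t \<theta> a) - kappa m a l))) (at \<theta>)"
proof -
  let ?S = "{\<theta>'. 0 < \<theta>' + a * t}"
  have oS: "open ?S" by (intro open_Collect_less continuous_intros)
  have eq: "\<And>z. z \<in> ?S \<Longrightarrow> sinh (Uf m l t z a) - kappa m a l * Uf m l t z a = (z + a * t) / pfun m a l"
    using U_props(2) a0 by simp
  have Pa: "0 < pfun m a l" using P0 a0 by simp
  have cg: "isCont (\<lambda>\<theta>'. Uf m l t \<theta>' a) \<theta>"
    by (rule implicit_cont[OF oS _ eq]) (use X0 K1 a0 Pa in \<open>auto intro!: continuous_intros\<close>)
  have dc: "((\<lambda>z. (z + a * t) / pfun m a l) has_real_derivative 1 / pfun m a l) (at \<theta>)"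
    apply (rule Dcong)
     apply (rule derivative_eq_intros refl)+
    using Pa by simp_all
  have nz: "cosh (Uf m l t \<theta> a) - kappa m a l \<noteq> 0"
    using cosh_real_ge_1[of "Uf m l t \<theta> a"] K1[of a] a0 by simp
  have "((\<lambda>\<theta>'. Uf m l t \<theta>' a) has_real_derivative
     (Uf m l t \<theta> a * 0 + 1 / pfun m a l) / (cosh (Uf m l t \<theta> a) - kappa m a l)) (at \<theta>)"
    by (rule implicit_deriv[OF oS _ eq cg DERIV_const dc nz]) (use X0 in simp)
  then show ?thesis by simp
qed

lemma dU_a: assumes a0: "0 < a" and X0: "0 < \<theta> + a * t"
  shows "((\<lambda>a'. Uf m l t \<theta> a') has_real_derivative
     (a * t / pfun m a l + (1 + (kappa m a l)\<^sup>2) * sinh (Uf m l t \<theta> a) - 2 * kappa m a l * Uf m l t \<theta> a)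
       / (a * (cosh (Uf m l t \<theta> a) - kappa m a l))) (at a)"
proof -
  let ?S = "{a'. 0 < a'} \<inter> {a'. 0 < \<theta> + a' * t}"
  have oS: "open ?S" by (intro open_Int open_Collect_less continuous_intros)
  have aS: "a \<in> ?S" using a0 X0 by simp
  have eq: "\<And>z. z \<in> ?S \<Longrightarrow> sinh (Uf m l t \<theta> z) - kappa m z l * Uf m l t \<theta> z = (\<theta> + z * t) / pfun m z l"
    using U_props(2) by simp
  have Pa: "0 < pfun m a l" using P0 a0 by simp
  have Ka: "kappa m a l < 1" using K1 a0 by simp
  have dK: "((\<lambda>a. kappa m a l) has_real_derivative (-(kappa m a l / a) * (1 - (kappa m a l)\<^sup>2))) (at a)"
    by (rule kappa_deriv[OF m0 l0 a0])
  have dP: "((\<lambda>a. pfun m a l) has_real_derivative (-(pfun m a l / a) * (1 + (kappa m a l)\<^sup>2))) (at a)"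
    by (rule pfun_deriv[OF m0 l0 a0])
  have cK: "isCont (\<lambda>a. kappa m a l) a" by (rule DERIV_isCont[OF dK])
  have cP: "isCont (\<lambda>a. pfun m a l) a" by (rule DERIV_isCont[OF dP])
  have cc: "isCont (\<lambda>z. (\<theta> + z * t) / pfun m z l) a"
    using cP Pa by (intro continuous_intros) auto
  have cg: "isCont (\<lambda>a'. Uf m l t \<theta> a') a"
    by (rule implicit_cont[OF oS aS eq _ cK cc]) (use K1 in auto)
  define P where "P = pfun m a l"
  define K where "K = kappa m a l"
  define u where "u = Uf m l t \<theta> a"
  have dc: "((\<lambda>z. (\<theta> + z * t) / pfun m z l) has_real_derivative
      (t * P - (\<theta> + a * t) * (-(P / a) * (1 + K\<^sup>2))) / P\<^sup>2) (at a)"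
    apply (rule Dcong)
     apply (rule derivative_eq_intros refl dP)+
    using Pa unfolding P_def K_def by (simp_all add: power2_eq_square)
  have nz: "cosh u - K \<noteq> 0" using cosh_real_ge_1[of u] Ka unfolding K_def by simp
  have d: "((\<lambda>a'. Uf m l t \<theta> a') has_real_derivative
     (u * (-(K / a) * (1 - K\<^sup>2)) + (t * P - (\<theta> + a * t) * (-(P / a) * (1 + K\<^sup>2))) / P\<^sup>2) / (cosh u - K)) (at a)"
    using implicit_deriv[OF oS aS eq cg dK dc] nz unfolding u_def K_def by simp
  have X: "\<theta> + a * t = P * (sinh u - K * u)"
    using U_props(2)[OF a0 X0] Pa unfolding P_def K_def u_def by (simp add: field_simps)
  have "(u * (-(K / a) * (1 - K\<^sup>2)) + (t * P - (\<theta> + a * t) * (-(P / a) * (1 + K\<^sup>2))) / P\<^sup>2) / (cosh u - K)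
      = (a * t / P + (1 + K\<^sup>2) * sinh u - 2 * K * u) / (a * (cosh u - K))"
    unfolding X using Pa a0 nz unfolding P_def by (simp add: field_simps power2_eq_square)
  then show ?thesis using d unfolding P_def K_def u_def by simp
qed

lemma dR_theta: assumes a0: "0 < a" and X0: "0 < \<theta> + a * t"
  shows "((\<lambda>\<theta>'. Rtil m t \<theta>' a l) has_real_derivative
     sinh (Uf m l t \<theta> a) / (cosh (Uf m l t \<theta> a) - kappa m a l)) (at \<theta>)"
proof -
  let ?S = "{\<theta>'. 0 < \<theta>' + a * t}"
  have oS: "open ?S" by (intro open_Collect_less continuous_intros)
  have Pa: "0 < pfun m a l" using P0 a0 by simp
  have Ka: "kappa m a l < 1" using K1 a0 by simp
  have nz: "cosh (Uf m l t \<theta> a) - kappa m a l \<noteq> 0"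
    using cosh_real_ge_1[of "Uf m l t \<theta> a"] Ka by simp
  have "((\<lambda>\<theta>'. pfun m a l * (cosh (Uf m l t \<theta>' a) - kappa m a l)) has_real_derivative
     sinh (Uf m l t \<theta> a) / (cosh (Uf m l t \<theta> a) - kappa m a l)) (at \<theta>)"
    apply (rule Dcong)
     apply (rule derivative_eq_intros refl dU_theta[OF a0 X0])+
    using Pa nz by (simp_all add: field_simps)
  then show ?thesis
    by (rule has_field_derivative_transform_within_open[OF _ oS]) (use X0 Rtil_eq a0 in auto)
qed

lemma dR_a: assumes a0: "0 < a" and X0: "0 < \<theta> + a * t"
  shows "((\<lambda>a'. Rtil m t \<theta> a' l) has_real_derivative
     t + (pfun m a l / a) * ((a * t / pfun m a l * (kappa m a l - (cosh (Uf m l t \<theta> a) - sinh (Uf m l t \<theta> a)))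
        + (- (1 + 3 * (kappa m a l)\<^sup>2) + kappa m a l * (3 + (kappa m a l)\<^sup>2) * cosh (Uf m l t \<theta> a)
           - 2 * kappa m a l * sinh (Uf m l t \<theta> a) * Uf m l t \<theta> a)) / (cosh (Uf m l t \<theta> a) - kappa m a l))) (at a)"
proof -
  let ?S = "{a'. 0 < a'} \<inter> {a'. 0 < \<theta> + a' * t}"
  have oS: "open ?S" by (intro open_Int open_Collect_less continuous_intros)
  have aS: "a \<in> ?S" using a0 X0 by simp
  have Pa: "0 < pfun m a l" using P0 a0 by simp
  have Ka: "kappa m a l < 1" using K1 a0 by simp
  have nz: "cosh (Uf m l t \<theta> a) - kappa m a l \<noteq> 0"
    using cosh_real_ge_1[of "Uf m l t \<theta> a"] Ka by simp
  have "((\<lambda>a'. pfun m a' l * (cosh (Uf m l t \<theta> a') - kappa m a' l)) has_real_derivative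
     (-(pfun m a l / a) * (1 + (kappa m a l)\<^sup>2) * (cosh (Uf m l t \<theta> a) - kappa m a l)
      + pfun m a l * (sinh (Uf m l t \<theta> a) * ((a * t / pfun m a l + (1 + (kappa m a l)\<^sup>2) * sinh (Uf m l t \<theta> a) - 2 * kappa m a l * Uf m l t \<theta> a)
       / (a * (cosh (Uf m l t \<theta> a) - kappa m a l))) - (-(kappa m a l / a) * (1 - (kappa m a l)\<^sup>2))))) (at a)"
    apply (rule Dcong)
     apply (rule derivative_eq_intros refl dU_a[OF a0 X0] pfun_deriv[OF m0 l0 a0] kappa_deriv[OF m0 l0 a0])+
    by simp
  also have "(-(pfun m a l / a) * (1 + (kappa m a l)\<^sup>2) * (cosh (Uf m l t \<theta> a) - kappa m a l)
      + pfun m a l * (sinh (Uf m l t \<theta> a) * ((a * t / pfun m a l + (1 + (kappa m a l)\<^sup>2) * sinh (Uf m l t \<theta> a) - 2 * kappa m a l * Uf m l t \<theta> a)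
       / (a * (cosh (Uf m l t \<theta> a) - kappa m a l))) - (-(kappa m a l / a) * (1 - (kappa m a l)\<^sup>2))))
     = t + (pfun m a l / a) * ((a * t / pfun m a l * (kappa m a l - (cosh (Uf m l t \<theta> a) - sinh (Uf m l t \<theta> a)))
        + (- (1 + 3 * (kappa m a l)\<^sup>2) + kappa m a l * (3 + (kappa m a l)\<^sup>2) * cosh (Uf m l t \<theta> a)
           - 2 * kappa m a l * sinh (Uf m l t \<theta> a) * Uf m l t \<theta> a)) / (cosh (Uf m l t \<theta> a) - kappa m a l))"
    by (rule id_D2) (use a0 Pa nz in \<open>auto simp: sinh_square_eq\<close>)
  finally show ?thesis
    by (rule has_field_derivative_transform_within_open[OF _ oS aS]) (use Rtil_eq in auto)
qed

lemma d2R_theta: assumes a0: "0 < a" and X0: "0 < \<theta> + a * t"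
  shows "((\<lambda>\<theta>'. deriv (\<lambda>\<theta>''. Rtil m t \<theta>'' a l) \<theta>') has_real_derivative
     (1 - kappa m a l * cosh (Uf m l t \<theta> a)) / (pfun m a l * (cosh (Uf m l t \<theta> a) - kappa m a l) ^ 3)) (at \<theta>)"
proof -
  let ?S = "{\<theta>'. 0 < \<theta>' + a * t}"
  have oS: "open ?S" by (intro open_Collect_less continuous_intros)
  have Pa: "0 < pfun m a l" using P0 a0 by simp
  have Ka: "kappa m a l < 1" using K1 a0 by simp
  have nz: "cosh (Uf m l t \<theta> a) - kappa m a l \<noteq> 0"
    using cosh_real_ge_1[of "Uf m l t \<theta> a"] Ka by simp
  have "((\<lambda>\<theta>'. sinh (Uf m l t \<theta>' a) / (cosh (Uf m l t \<theta>' a) - kappa m a l)) has_real_derivative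
     (1 - kappa m a l * cosh (Uf m l t \<theta> a)) / (pfun m a l * (cosh (Uf m l t \<theta> a) - kappa m a l) ^ 3)) (at \<theta>)"
    apply (rule Dcong)
     apply (rule derivative_eq_intros refl dU_theta[OF a0 X0])+
    using Pa nz apply (simp_all)
    by (rule id_D11) (use Pa nz in \<open>simp_all add: sinh_square_eq\<close>)
  then show ?thesis
  proof (rule has_field_derivative_transform_within_open[OF _ oS])
    fix z assume "z \<in> ?S"
    then show "sinh (Uf m l t z a) / (cosh (Uf m l t z a) - kappa m a l) = deriv (\<lambda>\<theta>''. Rtil m t \<theta>'' a l) z"
      using DERIV_imp_deriv[OF dR_theta[OF a0]] by simp
  qed (use X0 in simp)
qed

lemma d2R_atheta: assumes a0: "0 < a" and X0: "0 < \<theta> + a * t"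
  shows "((\<lambda>a'. deriv (\<lambda>\<theta>'. Rtil m t \<theta>' a' l) \<theta>) has_real_derivative
     ((1 - kappa m a l * cosh (Uf m l t \<theta> a)) * (a * t / pfun m a l + ((1 + (kappa m a l)\<^sup>2) * sinh (Uf m l t \<theta> a) - 2 * kappa m a l * Uf m l t \<theta> a))
      - sinh (Uf m l t \<theta> a) * kappa m a l * (1 - (kappa m a l)\<^sup>2) * (cosh (Uf m l t \<theta> a) - kappa m a l))
     / (a * (cosh (Uf m l t \<theta> a) - kappa m a l) ^ 3)) (at a)"
proof -
  let ?S = "{a'. 0 < a'} \<inter> {a'. 0 < \<theta> + a' * t}"
  have oS: "open ?S" by (intro open_Int open_Collect_less continuous_intros)
  have aS: "a \<in> ?S" using a0 X0 by simp
  have Pa: "0 < pfun m a l" using P0 a0 by simp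
  have Ka: "kappa m a l < 1" using K1 a0 by simp
  have nz: "cosh (Uf m l t \<theta> a) - kappa m a l \<noteq> 0"
    using cosh_real_ge_1[of "Uf m l t \<theta> a"] Ka by simp
  have "((\<lambda>a'. sinh (Uf m l t \<theta> a') / (cosh (Uf m l t \<theta> a') - kappa m a' l)) has_real_derivative
     ((1 - kappa m a l * cosh (Uf m l t \<theta> a)) * (a * t / pfun m a l + ((1 + (kappa m a l)\<^sup>2) * sinh (Uf m l t \<theta> a) - 2 * kappa m a l * Uf m l t \<theta> a))
      - sinh (Uf m l t \<theta> a) * kappa m a l * (1 - (kappa m a l)\<^sup>2) * (cosh (Uf m l t \<theta> a) - kappa m a l))
     / (a * (cosh (Uf m l t \<theta> a) - kappa m a l) ^ 3)) (at a)"
    apply (rule Dcong)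
     apply (rule derivative_eq_intros refl dU_a[OF a0 X0] kappa_deriv[OF m0 l0 a0])+
    using Pa nz apply (simp_all)
    by (rule id_D21) (use a0 nz in \<open>simp_all add: sinh_square_eq\<close>)
  then show ?thesis
  proof (rule has_field_derivative_transform_within_open[OF _ oS aS])
    fix z assume "z \<in> ?S"
    then show "sinh (Uf m l t \<theta> z) / (cosh (Uf m l t \<theta> z) - kappa m z l) = deriv (\<lambda>\<theta>'. Rtil m t \<theta>' z l) \<theta>"
      using DERIV_imp_deriv[OF dR_theta] by simp
  qed
qed

lemma d2R_a: assumes a0: "0 < a" and X0: "0 < \<theta> + a * t"
  shows "((\<lambda>a'. deriv (\<lambda>a''. Rtil m t \<theta> a'' l) a') has_real_derivative
     (pfun m a l / a\<^sup>2) * Zx (pfun m a l) (kappa m a l) (Uf m l t \<theta> a) a t 0) (at a)"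
proof -
  let ?S = "{a'. 0 < a'} \<inter> {a'. 0 < \<theta> + a' * t}"
  have oS: "open ?S" by (intro open_Int open_Collect_less continuous_intros)
  have aS: "a \<in> ?S" using a0 X0 by simp
  have Pa: "0 < pfun m a l" using P0 a0 by simp
  have Ka: "kappa m a l < 1" using K1 a0 by simp
  have nz: "cosh (Uf m l t \<theta> a) - kappa m a l \<noteq> 0"
    using cosh_real_ge_1[of "Uf m l t \<theta> a"] Ka by simp
  have Pne: "pfun m a l \<noteq> 0" using Pa by simp
  have ane: "a \<noteq> 0" using a0 by simp
  define P where "P = pfun m a l"
  define K where "K = kappa m a l"
  define u where "u = Uf m l t \<theta> a"
  define AU where "AU = (a * t / P + ((1 + K\<^sup>2) * sinh u - 2 * K * u)) / (cosh u - K)"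
  have nz': "cosh u - K \<noteq> 0" using nz unfolding u_def K_def .
  have dK: "((\<lambda>x. kappa m x l) has_real_derivative -(K / a) * (1 - K\<^sup>2)) (at a)"
    unfolding K_def by (rule kappa_deriv[OF m0 l0 a0])
  have dP: "((\<lambda>x. pfun m x l) has_real_derivative -(P / a) * (1 + K\<^sup>2)) (at a)"
    unfolding K_def P_def by (rule pfun_deriv[OF m0 l0 a0])
  have dU: "((\<lambda>x. Uf m l t \<theta> x) has_real_derivative AU / a) (at a)"
  proof (rule Dcong[OF dU_a[OF a0 X0]])
    show "(a * t / pfun m a l + (1 + (kappa m a l)\<^sup>2) * sinh (Uf m l t \<theta> a) - 2 * kappa m a l * Uf m l t \<theta> a) /
       (a * (cosh (Uf m l t \<theta> a) - kappa m a l)) = AU / a"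
      unfolding AU_def P_def K_def u_def using ane nz by (simp add: field_simps)
  qed
  have dT: "((\<lambda>x. x * t / pfun m x l) has_real_derivative a * t / P * (2 + K\<^sup>2) / a) (at a)"
    apply (rule Dcong)
     apply (rule DERIV_divide[OF DERIV_mult[OF DERIV_ident DERIV_const] dP Pne])
    unfolding P_def using Pne ane by (simp add: field_simps power2_eq_square)
  have dC: "((\<lambda>x. cosh (Uf m l t \<theta> x)) has_real_derivative sinh u * (AU / a)) (at a)"
    unfolding u_def by (rule has_field_derivative_cosh[OF dU])
  have dS: "((\<lambda>x. sinh (Uf m l t \<theta> x)) has_real_derivative cosh u * (AU / a)) (at a)"
    unfolding u_def by (rule has_field_derivative_sinh[OF dU])
  have dem: "((\<lambda>x. cosh (Uf m l t \<theta> x) - sinh (Uf m l t \<theta> x)) has_real_derivative (sinh u - cosh u) * (AU / a)) (at a)"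
    by (rule Dcong[OF DERIV_diff[OF dC dS]]) (simp add: algebra_simps)
  have dE: "((\<lambda>x. cosh (Uf m l t \<theta> x) - kappa m x l) has_real_derivative sinh u * (AU / a) - (-(K / a) * (1 - K\<^sup>2))) (at a)"
    by (rule DERIV_diff[OF dC dK])
  have dN: "((\<lambda>x. - (1 + 3 * (kappa m x l)\<^sup>2) + kappa m x l * (3 + (kappa m x l)\<^sup>2) * cosh (Uf m l t \<theta> x)
           - 2 * kappa m x l * sinh (Uf m l t \<theta> x) * Uf m l t \<theta> x) has_real_derivative
      (- (6 * K * (-(K / a) * (1 - K\<^sup>2))) + ((-(K / a) * (1 - K\<^sup>2)) * (3 + K\<^sup>2) + K * (2 * K * (-(K / a) * (1 - K\<^sup>2)))) * cosh u
           + K * (3 + K\<^sup>2) * (sinh u * (AU / a)) - 2 * ((-(K / a) * (1 - K\<^sup>2)) * sinh u * u + K * (cosh u * (AU / a)) * u + K * sinh u * (AU / a)))) (at a)"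
    apply (rule Dcong)
     apply (rule derivative_eq_intros refl dK dU dC dS)+
    unfolding K_def u_def by (simp add: algebra_simps power2_eq_square)
  have dNum: "((\<lambda>x. x * t / pfun m x l * (kappa m x l - (cosh (Uf m l t \<theta> x) - sinh (Uf m l t \<theta> x)))
        + (- (1 + 3 * (kappa m x l)\<^sup>2) + kappa m x l * (3 + (kappa m x l)\<^sup>2) * cosh (Uf m l t \<theta> x)
           - 2 * kappa m x l * sinh (Uf m l t \<theta> x) * Uf m l t \<theta> x)) has_real_derivative
      (a * t / P * (2 + K\<^sup>2) / a) * (K - (cosh u - sinh u)) + (-(K / a) * (1 - K\<^sup>2) - (sinh u - cosh u) * (AU / a)) * (a * t / P)
      + (- (6 * K * (-(K / a) * (1 - K\<^sup>2))) + ((-(K / a) * (1 - K\<^sup>2)) * (3 + K\<^sup>2) + K * (2 * K * (-(K / a) * (1 - K\<^sup>2)))) * cosh u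
           + K * (3 + K\<^sup>2) * (sinh u * (AU / a)) - 2 * ((-(K / a) * (1 - K\<^sup>2)) * sinh u * u + K * (cosh u * (AU / a)) * u + K * sinh u * (AU / a)))) (at a)"
    using DERIV_add[OF DERIV_mult[OF dT DERIV_diff[OF dK dem]] dN] unfolding P_def K_def u_def by simp
  have dQ: "((\<lambda>x. pfun m x l / x) has_real_derivative (-(P / a) * (1 + K\<^sup>2) * a - P * 1) / (a * a)) (at a)"
    using DERIV_divide[OF dP DERIV_ident ane] unfolding P_def by simp
  have D: "((\<lambda>a'. t + (pfun m a' l / a') * ((a' * t / pfun m a' l * (kappa m a' l - (cosh (Uf m l t \<theta> a') - sinh (Uf m l t \<theta> a')))
        + (- (1 + 3 * (kappa m a' l)\<^sup>2) + kappa m a' l * (3 + (kappa m a' l)\<^sup>2) * cosh (Uf m l t \<theta> a')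
           - 2 * kappa m a' l * sinh (Uf m l t \<theta> a') * Uf m l t \<theta> a')) / (cosh (Uf m l t \<theta> a') - kappa m a' l)))
     has_real_derivative (pfun m a l / a\<^sup>2) * Zx (pfun m a l) (kappa m a l) (Uf m l t \<theta> a) a t 0) (at a)"
  proof (rule Dcong[OF DERIV_add[OF DERIV_const DERIV_mult[OF dQ DERIV_divide[OF dNum dE nz]]]])
    show "0 + ((-(P / a) * (1 + K\<^sup>2) * a - P * 1) / (a * a) *
       ((a * t / pfun m a l * (kappa m a l - (cosh (Uf m l t \<theta> a) - sinh (Uf m l t \<theta> a)))
        + (- (1 + 3 * (kappa m a l)\<^sup>2) + kappa m a l * (3 + (kappa m a l)\<^sup>2) * cosh (Uf m l t \<theta> a)
           - 2 * kappa m a l * sinh (Uf m l t \<theta> a) * Uf m l t \<theta> a)) / (cosh (Uf m l t \<theta> a) - kappa m a l)) +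
      (((a * t / P * (2 + K\<^sup>2) / a) * (K - (cosh u - sinh u)) + (-(K / a) * (1 - K\<^sup>2) - (sinh u - cosh u) * (AU / a)) * (a * t / P)
      + (- (6 * K * (-(K / a) * (1 - K\<^sup>2))) + ((-(K / a) * (1 - K\<^sup>2)) * (3 + K\<^sup>2) + K * (2 * K * (-(K / a) * (1 - K\<^sup>2)))) * cosh u
           + K * (3 + K\<^sup>2) * (sinh u * (AU / a)) - 2 * ((-(K / a) * (1 - K\<^sup>2)) * sinh u * u + K * (cosh u * (AU / a)) * u + K * sinh u * (AU / a))))
        * (cosh (Uf m l t \<theta> a) - kappa m a l) -
       (a * t / pfun m a l * (kappa m a l - (cosh (Uf m l t \<theta> a) - sinh (Uf m l t \<theta> a)))
        + (- (1 + 3 * (kappa m a l)\<^sup>2) + kappa m a l * (3 + (kappa m a l)\<^sup>2) * cosh (Uf m l t \<theta> a)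
           - 2 * kappa m a l * sinh (Uf m l t \<theta> a) * Uf m l t \<theta> a)) *
       (sinh u * (AU / a) - (-(K / a) * (1 - K\<^sup>2)))) /
       ((cosh (Uf m l t \<theta> a) - kappa m a l) * (cosh (Uf m l t \<theta> a) - kappa m a l)) * (pfun m a l / a))
      = pfun m a l / a\<^sup>2 * Zx (pfun m a l) (kappa m a l) (Uf m l t \<theta> a) a t 0"
      unfolding P_def[symmetric] K_def[symmetric] u_def[symmetric] Zx_def AU_def[symmetric] add_0_left
      by (rule id_D22[OF ane nz']) simp
  qed
  then show ?thesis
  proof (rule has_field_derivative_transform_within_open[OF _ oS aS])
    fix z assume "z \<in> ?S"
    then show "t + (pfun m z l / z) * ((z * t / pfun m z l * (kappa m z l - (cosh (Uf m l t \<theta> z) - sinh (Uf m l t \<theta> z)))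
        + (- (1 + 3 * (kappa m z l)\<^sup>2) + kappa m z l * (3 + (kappa m z l)\<^sup>2) * cosh (Uf m l t \<theta> z)
           - 2 * kappa m z l * sinh (Uf m l t \<theta> z) * Uf m l t \<theta> z)) / (cosh (Uf m l t \<theta> z) - kappa m z l))
       = deriv (\<lambda>a''. Rtil m t \<theta> a'' l) z"
      using DERIV_imp_deriv[OF dR_a] by simp
  qed
qed

end

lemma point_bounds:
  fixes m t \<theta> a l :: real
  assumes m0: "0 < m" and t0: "0 < t" and a0: "0 < a" and l0: "0 < l" and th: "\<bar>\<theta>\<bar> \<le> a * t / 2"
  shows "a * t \<le> 2 * Rtil m t \<theta> a l"
    and "Rtil m t \<theta> a l \<le> (exp 7 + 6) * (pfun m a l + a * t)"
    and "\<bar>deriv (\<lambda>\<theta>'. Rtil m t \<theta>' a l) \<theta> - 1\<bar> \<le> 2 * (pfun m a l / (a * t))"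
    and "\<bar>deriv (\<lambda>a'. Rtil m t \<theta> a' l) a - t\<bar> \<le> 435 * (japan (pfun m a l / a) * ln (japan t))"
    and "\<bar>deriv (\<lambda>\<theta>''. deriv (\<lambda>\<theta>'. Rtil m t \<theta>' a l) \<theta>'') \<theta>\<bar> \<le> 4 * (pfun m a l / (a\<^sup>2 * t\<^sup>2))"
    and "\<bar>deriv (\<lambda>a'. deriv (\<lambda>\<theta>'. Rtil m t \<theta>' a' l) \<theta>) a\<bar> \<le> 12 * (pfun m a l / (a\<^sup>2 * t))"
    and "\<bar>deriv (\<lambda>a''. deriv (\<lambda>a'. Rtil m t \<theta> a' l) a'') a\<bar> \<le> 17400 * ((1 / a) * japan (pfun m a l / a) * ln (japan t))"
proof -
  have at0: "0 < a * t" using a0 t0 by simp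
  have X0: "0 < \<theta> + a * t" using th at0 by (simp add: abs_le_iff)
  have Xlo: "a * t / 2 \<le> \<theta> + a * t" using th by (simp add: abs_le_iff)
  have Xhi: "\<theta> + a * t \<le> 3 / 2 * (a * t)" using th by (simp add: abs_le_iff)
  define P where "P = pfun m a l"
  define K where "K = kappa m a l"
  define u where "u = Uf m l t \<theta> a"
  define T where "T = a * t / P"
  have Pa: "0 < P" unfolding P_def using pfun_pos m0 l0 a0 by simp
  have Kp: "0 < K" unfolding K_def using kappa_pos l0 by simp
  have Kl: "K < 1" unfolding K_def using kappa_lt1 m0 l0 a0 by simp
  have u0: "0 < u" unfolding u_def using U_props(1)[OF m0 l0 t0 a0 X0] .
  have yX: "sinh u - K * u = (\<theta> + a * t) / P" unfolding u_def K_def P_def using U_props(2)[OF m0 l0 t0 a0 X0] .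
  have T0: "0 < T" unfolding T_def using at0 Pa by simp
  have aT: "a * t = P * T" unfolding T_def using Pa by simp
  have Py: "P * (sinh u - K * u) = \<theta> + a * t" using yX Pa by simp
  have yT: "sinh u - K * u \<le> 3 / 2 * T"
  proof -
    have "P * (sinh u - K * u) \<le> P * (3 / 2 * T)" using Py Xhi aT by simp
    then show ?thesis using Pa by simp
  qed
  have Ty: "T \<le> 2 * (sinh u - K * u)"
  proof -
    have e: "P * (2 * (sinh u - K * u)) = 2 * (P * (sinh u - K * u))" by simp
    have "a * t \<le> 2 * (\<theta> + a * t)" using Xlo by simp
    then have "P * T \<le> P * (2 * (sinh u - K * u))" unfolding e Py aT .
    then show ?thesis using Pa by simp
  qed
  note Fprem = u0 Kp Kl
  have S0: "0 < sinh u" using u0 by simp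
  have C1: "1 \<le> cosh u" by (rule cosh_real_ge_1)
  have E0: "0 < cosh u - K" using E_pos[OF Fprem] unfolding Ef_def .
  have em0: "0 < cosh u - sinh u" using em_pos[OF Fprem] unfolding emf_def .
  have em1: "cosh u - sinh u \<le> 1" using emf_le1[OF Fprem] unfolding emf_def .
  have yE: "sinh u - K * u \<le> cosh u - K" using y_le_E[OF Fprem] unfolding yf_def Ef_def .
  have y0: "0 < sinh u - K * u" using y_pos[OF Fprem] unfolding yf_def .
  have W0: "0 \<le> (1 + K\<^sup>2) * sinh u - 2 * K * u" using W_nonneg[OF Fprem] unfolding Wf_def .
  have W2: "(1 + K\<^sup>2) * sinh u - 2 * K * u \<le> 2 * (sinh u - K * u)" using W_le[OF Fprem] unfolding Wf_def yf_def .
  have eC: "(1 - K) * cosh u \<le> cosh u - K" using epsC[OF Fprem] unfolding Ef_def .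
  have eS: "(1 - K) * sinh u \<le> cosh u - K" using epsS[OF Fprem] unfolding Ef_def .
  have eE: "1 - K \<le> cosh u - K" using E_ge_eps[OF Fprem] unfolding Ef_def .
  have Kem1: "\<bar>K - (cosh u - sinh u)\<bar> \<le> 1" using absKem[OF Fprem] unfolding emf_def .
  have KemS: "\<bar>K - (cosh u - sinh u)\<bar> * sinh u \<le> 5 * (cosh u - K)" using Kem_S[OF Fprem] unfolding emf_def Ef_def .
  have Sy: "sinh u * (sinh u - K * u) \<le> 4 * (cosh u - K)\<^sup>2" using Sy[OF Fprem] unfolding yf_def Ef_def .
  have Cuy: "cosh u * u * (sinh u - K * u) \<le> 8 * (1 + u) * (cosh u - K)\<^sup>2" using Cuy[OF Fprem] unfolding yf_def Ef_def .
  have Nb: "\<bar>- (1 + 3 * K\<^sup>2) + K * (3 + K\<^sup>2) * cosh u - 2 * K * sinh u * u\<bar> \<le> 13 * (1 + u) * (cosh u - K)"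
    using N1_bound[OF Fprem] unfolding Nf_def Ef_def .
  have KC: "\<bar>1 - K * cosh u\<bar> \<le> cosh u - K" using absKC[OF Fprem] unfolding Ef_def .
  have ul: "u \<le> 7 + ln (1 + (sinh u - K * u))" using u_log[OF Fprem] unfolding yf_def .
  have Cb: "cosh u \<le> exp 7 + 4 * (sinh u - K * u)" using C_bound[OF Fprem] unfolding yf_def .
  have T2: "T \<le> 2 * (sinh u - K * u)" by (rule Ty)
  note G = Zbound_abs[OF u0 Kp Kl S0 C1 E0 em0 em1 less_imp_le[OF T0] T2 yE y0 W0 W2 refl eC eS eE Kem1 KemS Sy Cuy Nb]
     c3[OF u0 Kp Kl S0 C1 E0 em0 em1 less_imp_le[OF T0] T2 yE y0 W0 W2 refl eC eS eE Kem1 KemS Sy Cuy Nb]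
     c4[OF u0 Kp Kl S0 C1 E0 em0 em1 less_imp_le[OF T0] T2 yE y0 W0 W2 refl eC eS eE Kem1 KemS Sy Cuy Nb]
     c5[OF u0 Kp Kl S0 C1 E0 em0 em1 less_imp_le[OF T0] T2 yE y0 W0 W2 refl eC eS eE Kem1 KemS Sy Cuy Nb KC]
     c6[OF u0 Kp Kl S0 C1 E0 em0 em1 less_imp_le[OF T0] T2 yE y0 W0 W2 refl eC eS eE Kem1 KemS Sy Cuy Nb KC]
  have r0: "0 < P / a" using Pa a0 by simp
  have TT: "T = t / (P / a)" unfolding T_def using a0 Pa by simp
  have lk: "P / a * (1 + u) \<le> 29 * (japan (P / a) * ln (japan t))"
    by (rule link[OF r0 t0 TT y0 yT ul u0])
  have jl0: "0 \<le> japan (P / a) * ln (japan t)"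
  proof -
    have "1 \<le> japan t" unfolding japan_def by simp
    moreover have "0 \<le> japan (P / a)" unfolding japan_def by simp
    ultimately show ?thesis by simp
  qed
  have R0: "Rtil m t \<theta> a l = P * (cosh u - K)" unfolding P_def K_def u_def by (rule Rtil_eq[OF m0 l0 t0 a0 X0])
  have d1: "deriv (\<lambda>\<theta>'. Rtil m t \<theta>' a l) \<theta> = sinh u / (cosh u - K)"
    unfolding u_def K_def by (rule DERIV_imp_deriv[OF dR_theta[OF m0 l0 t0 a0 X0]])
  have d2: "deriv (\<lambda>a'. Rtil m t \<theta> a' l) a = t + (P / a) * ((T * (K - (cosh u - sinh u))
        + (- (1 + 3 * K\<^sup>2) + K * (3 + K\<^sup>2) * cosh u - 2 * K * sinh u * u)) / (cosh u - K))"
    unfolding u_def K_def P_def T_def by (rule DERIV_imp_deriv[OF dR_a[OF m0 l0 t0 a0 X0]])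
  have d11: "deriv (\<lambda>\<theta>''. deriv (\<lambda>\<theta>'. Rtil m t \<theta>' a l) \<theta>'') \<theta> = (1 - K * cosh u) / (P * (cosh u - K) ^ 3)"
    unfolding u_def K_def P_def by (rule DERIV_imp_deriv[OF d2R_theta[OF m0 l0 t0 a0 X0]])
  have d21: "deriv (\<lambda>a'. deriv (\<lambda>\<theta>'. Rtil m t \<theta>' a' l) \<theta>) a =
     ((1 - K * cosh u) * (T + ((1 + K\<^sup>2) * sinh u - 2 * K * u)) - sinh u * K * (1 - K\<^sup>2) * (cosh u - K))
     / (a * (cosh u - K) ^ 3)"
    unfolding u_def K_def P_def T_def by (rule DERIV_imp_deriv[OF d2R_atheta[OF m0 l0 t0 a0 X0]])
  have d22: "deriv (\<lambda>a''. deriv (\<lambda>a'. Rtil m t \<theta> a' l) a'') a = (P / a\<^sup>2) * Zx P K u a t 0"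
    unfolding u_def K_def P_def by (rule DERIV_imp_deriv[OF d2R_a[OF m0 l0 t0 a0 X0]])
  show "a * t \<le> 2 * Rtil m t \<theta> a l"
  proof -
    have "P * (sinh u - K * u) \<le> P * (cosh u - K)" using yE Pa by simp
    then show ?thesis using Py Xlo R0 by simp
  qed
  show "Rtil m t \<theta> a l \<le> (exp 7 + 6) * (pfun m a l + a * t)"
  proof -
    have "P * (cosh u - K) \<le> P * (exp 7 + 4 * (sinh u - K * u))" using Cb Kp Pa by simp
    also have "\<dots> = exp 7 * P + 4 * (\<theta> + a * t)" using Py by (simp add: algebra_simps)
    also have "\<dots> \<le> exp 7 * P + 6 * (a * t)" using Xhi by simp
    also have "\<dots> \<le> (exp 7 + 6) * (P + a * t)"
    proof -
      have h: "(exp 7 + 6) * (P + a * t) = exp 7 * P + 6 * (a * t) + (6 * P + exp 7 * (a * t))"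
        by (simp add: algebra_simps)
      have "0 \<le> 6 * P + exp 7 * (a * t)" using Pa at0 by (intro add_nonneg_nonneg) auto
      then show ?thesis unfolding h by linarith
    qed
    finally show ?thesis unfolding R0 P_def .
  qed
  show "\<bar>deriv (\<lambda>\<theta>'. Rtil m t \<theta>' a l) \<theta> - 1\<bar> \<le> 2 * (pfun m a l / (a * t))"
  proof -
    have "sinh u / (cosh u - K) - 1 = (K - (cosh u - sinh u)) / (cosh u - K)" using E0 by (simp add: field_simps)
    then have "\<bar>sinh u / (cosh u - K) - 1\<bar> = \<bar>K - (cosh u - sinh u)\<bar> / (cosh u - K)" using E0 by simp
    also have "\<dots> \<le> 2 / T" using G(2) E0 T0 by (simp add: divide_simps mult.commute)
    also have "2 / T = 2 * (P / (a * t))" unfolding aT using Pa T0 by simp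
    finally show ?thesis unfolding d1 P_def .
  qed
  show "\<bar>deriv (\<lambda>a'. Rtil m t \<theta> a' l) a - t\<bar> \<le> 435 * (japan (pfun m a l / a) * ln (japan t))"
  proof -
    have "\<bar>deriv (\<lambda>a'. Rtil m t \<theta> a' l) a - t\<bar> = (P / a) * \<bar>(T * (K - (cosh u - sinh u))
        + (- (1 + 3 * K\<^sup>2) + K * (3 + K\<^sup>2) * cosh u - 2 * K * sinh u * u)) / (cosh u - K)\<bar>"
      unfolding d2 using r0 Pa a0 by (simp add: abs_mult)
    also have "\<dots> \<le> (P / a) * (15 * (1 + u))" using G(3) r0 by (intro mult_left_mono) auto
    also have "\<dots> = 15 * (P / a * (1 + u))" by simp
    also have "\<dots> \<le> 15 * (29 * (japan (P / a) * ln (japan t)))" using lk by simp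
    finally show ?thesis unfolding P_def by simp
  qed
  show "\<bar>deriv (\<lambda>\<theta>''. deriv (\<lambda>\<theta>'. Rtil m t \<theta>' a l) \<theta>'') \<theta>\<bar> \<le> 4 * (pfun m a l / (a\<^sup>2 * t\<^sup>2))"
  proof -
    have E3: "0 < (cosh u - K) ^ 3" using E0 by simp
    have "\<bar>(1 - K * cosh u) / (P * (cosh u - K) ^ 3)\<bar> = \<bar>1 - K * cosh u\<bar> / (P * (cosh u - K) ^ 3)"
      using Pa E3 by (simp add: abs_divide abs_mult)
    also have "\<dots> \<le> 4 / (P * T\<^sup>2)"
      using G(4) Pa E3 T0 by (simp add: divide_simps) (simp add: algebra_simps)
    also have "4 / (P * T\<^sup>2) = 4 * (P / (a\<^sup>2 * t\<^sup>2))"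
    proof -
      have "a\<^sup>2 * t\<^sup>2 = (P * T)\<^sup>2" using aT by (simp add: power_mult_distrib[symmetric])
      then show ?thesis using Pa T0 by (simp add: power2_eq_square field_simps)
    qed
    finally show ?thesis unfolding d11 P_def .
  qed
  show "\<bar>deriv (\<lambda>a'. deriv (\<lambda>\<theta>'. Rtil m t \<theta>' a' l) \<theta>) a\<bar> \<le> 12 * (pfun m a l / (a\<^sup>2 * t))"
  proof -
    have E3: "0 < (cosh u - K) ^ 3" using E0 by simp
    let ?X = "(1 - K * cosh u) * (T + ((1 + K\<^sup>2) * sinh u - 2 * K * u)) - sinh u * K * (1 - K\<^sup>2) * (cosh u - K)"
    have "\<bar>?X / (a * (cosh u - K) ^ 3)\<bar> = \<bar>?X\<bar> / (a * (cosh u - K) ^ 3)"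
      using a0 E3 by (simp add: abs_divide abs_mult)
    also have "\<dots> \<le> 12 / (a * T)"
      using G(5) a0 E3 T0 by (simp add: divide_simps) (simp add: algebra_simps)
    also have "12 / (a * T) = 12 * (P / (a\<^sup>2 * t))" unfolding T_def using a0 Pa t0 by (simp add: power2_eq_square field_simps)
    finally show ?thesis unfolding d21 P_def .
  qed
  show "\<bar>deriv (\<lambda>a''. deriv (\<lambda>a'. Rtil m t \<theta> a' l) a'') a\<bar> \<le> 17400 * ((1 / a) * japan (pfun m a l / a) * ln (japan t))"
  proof -
    have Zb: "\<bar>Zx P K u a t 0\<bar> \<le> 600 * (1 + u)" using G(1) unfolding Zx_def T_def .
    have "\<bar>(P / a\<^sup>2) * Zx P K u a t 0\<bar> = (1 / a) * ((P / a) * \<bar>Zx P K u a t 0\<bar>)"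
      using Pa a0 by (simp add: abs_mult power2_eq_square)
    also have "\<dots> \<le> (1 / a) * ((P / a) * (600 * (1 + u)))" using Zb r0 a0 by (intro mult_left_mono) auto
    also have "\<dots> = (1 / a) * (600 * (P / a * (1 + u)))" by simp
    also have "\<dots> \<le> (1 / a) * (600 * (29 * (japan (P / a) * ln (japan t))))" using lk a0 by (intro mult_left_mono) auto
    also have "\<dots> = 17400 * ((1 / a) * japan (P / a) * ln (japan t))" by simp
    finally show ?thesis unfolding d22 P_def .
  qed
qed


lemma le_C: "(A::real) \<le> c * X \<Longrightarrow> c \<le> C \<Longrightarrow> 0 \<le> X \<Longrightarrow> A \<le> C * X"
  by (meson mult_right_mono order_trans)

lemma japan_ge1: "1 \<le> japan x" unfolding japan_def by simp
lemma japan_nonneg: "0 \<le> japan x" unfolding japan_def by simp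

theorem lemma2p18:
  fixes m :: real
  assumes "m > 0"
  shows "\<exists>C>0. \<forall>t \<theta> a l. t > 0 \<and> a > 0 \<and> l > 0 \<and> \<bar>\<theta>\<bar> \<le> a * t / 2 \<longrightarrow>
    (let p = pfun m a l;
         Rt = (\<lambda>\<theta>' a'. Rtil m t \<theta>' a' l)
     in a * t \<le> C * Rt \<theta> a
      \<and> Rt \<theta> a \<le> C * (p + a * t)
      \<and> \<bar>deriv (\<lambda>\<theta>'. Rt \<theta>' a) \<theta> - 1\<bar> \<le> C * (p / (a * t))
      \<and> \<bar>deriv (\<lambda>a'. Rt \<theta> a') a - t\<bar> \<le> C * (japan (p / a) * ln (japan t))
      \<and> \<bar>deriv (\<lambda>\<theta>''. deriv (\<lambda>\<theta>'. Rt \<theta>' a) \<theta>'') \<theta>\<bar> \<le> C * (p / (a\<^sup>2 * t\<^sup>2))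
      \<and> \<bar>deriv (\<lambda>a'. deriv (\<lambda>\<theta>'. Rt \<theta>' a') \<theta>) a\<bar> \<le> C * (p / (a\<^sup>2 * t))
      \<and> \<bar>deriv (\<lambda>a''. deriv (\<lambda>a'. Rt \<theta> a') a'') a\<bar> \<le> C * ((1 / a) * japan (p / a) * ln (japan t)))"
proof -
  define C :: real where "C = exp 7 + 17400"
  have e7: "0 < exp (7::real)" by simp
  have C0: "0 < C" unfolding C_def using e7 by linarith
  have c1: "2 \<le> C" and c2: "exp 7 + 6 \<le> C" and c3: "435 \<le> C" and c4: "4 \<le> C" and c5: "12 \<le> C"
    and c6: "17400 \<le> C" unfolding C_def using e7 by linarith+
  show ?thesis
  proof (rule exI[of _ C], intro conjI allI impI)
    show "0 < C" by (rule C0)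
    fix t \<theta> a l :: real
    assume H: "0 < t \<and> 0 < a \<and> 0 < l \<and> \<bar>\<theta>\<bar> \<le> a * t / 2"
    then have t0: "0 < t" and a0: "0 < a" and l0: "0 < l" and th: "\<bar>\<theta>\<bar> \<le> a * t / 2" by auto
    note pb = point_bounds[OF assms t0 a0 l0 th]
    have P0: "0 < pfun m a l" using pfun_pos assms l0 a0 by simp
    have at0: "0 < a * t" using a0 t0 by simp
    have R0: "0 \<le> Rtil m t \<theta> a l" using pb(1) at0 by simp
    have jl: "0 \<le> japan (pfun m a l / a) * ln (japan t)"
      using japan_ge1[of t] japan_nonneg[of "pfun m a l / a"] by simp
    have x3: "0 \<le> pfun m a l / (a * t)" using P0 at0 by simp
    have x5: "0 \<le> pfun m a l / (a\<^sup>2 * t\<^sup>2)" using P0 by simp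
    have x6: "0 \<le> pfun m a l / (a\<^sup>2 * t)" using P0 t0 by simp
    have x7: "0 \<le> (1 / a) * japan (pfun m a l / a) * ln (japan t)"
      using jl a0 by (simp add: mult.assoc)
    have x2: "0 \<le> pfun m a l + a * t" using P0 at0 by simp
    show "let p = pfun m a l;
         Rt = (\<lambda>\<theta>' a'. Rtil m t \<theta>' a' l)
     in a * t \<le> C * Rt \<theta> a
      \<and> Rt \<theta> a \<le> C * (p + a * t)
      \<and> \<bar>deriv (\<lambda>\<theta>'. Rt \<theta>' a) \<theta> - 1\<bar> \<le> C * (p / (a * t))
      \<and> \<bar>deriv (\<lambda>a'. Rt \<theta> a') a - t\<bar> \<le> C * (japan (p / a) * ln (japan t))
      \<and> \<bar>deriv (\<lambda>\<theta>''. deriv (\<lambda>\<theta>'. Rt \<theta>' a) \<theta>'') \<theta>\<bar> \<le> C * (p / (a\<^sup>2 * t\<^sup>2))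
      \<and> \<bar>deriv (\<lambda>a'. deriv (\<lambda>\<theta>'. Rt \<theta>' a') \<theta>) a\<bar> \<le> C * (p / (a\<^sup>2 * t))
      \<and> \<bar>deriv (\<lambda>a''. deriv (\<lambda>a'. Rt \<theta> a') a'') a\<bar> \<le> C * ((1 / a) * japan (p / a) * ln (japan t))"
      unfolding Let_def
      using le_C[OF pb(1) c1 R0] le_C[OF pb(2) c2 x2] le_C[OF pb(3) c1 x3] le_C[OF pb(4) c3 jl]
        le_C[OF pb(5) c4 x5] le_C[OF pb(6) c5 x6] le_C[OF pb(7) c6 x7]
      by blast
  qed
qed


end
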